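(* Let $H$ be a Hilbert space and $(A_i)_{i\in I}$ a family of pairwise commuting compact operators on $H$ such that $\sum_{i\in I}A_i^*A_i=1$, with convergence in the strong operator topology. Then there is an orthogonal decomposition $H=H_{qn}\oplus H_{n}$ into closed subspaces, each invariant under all $A_i$, such that every restriction $A_i|_{H_n}$ is normal and every restriction $A_i|_{H_{qn}}$ is quasi-nilpotent.
   Context: An operator on a Banach space is quasi-nilpotent if its spectrum is $\{0\}$ (equivalently, its spectral radius is $0$). The sum over the (possibly infinite) index set $I$ is the strong limit of the net of finite partial sums. *)

theory Defs
  imports "HOL-Analysis.Analysis"
begin

text \<open>Convention: the inner product is conjugate-linear in the first argument.\<close>

class complex_vector = real_vector +
  fixes scaleC :: "complex \<Rightarrow> 'a \<Rightarrow> 'a" (infixr "*\<^sub>C" 75)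
  assumes scaleC_add_right: "scaleC a (x + y) = scaleC a x + scaleC a y"
    and scaleC_add_left: "scaleC (a + b) x = scaleC a x + scaleC b x"
    and scaleC_scaleC: "scaleC a (scaleC b x) = scaleC (a * b) x"
    and scaleC_one: "scaleC 1 x = x"
    and scaleR_scaleC: "scaleR r x = scaleC (complex_of_real r) x"

class complex_inner = complex_vector + real_normed_vector +
  fixes cinner :: "'a \<Rightarrow> 'a \<Rightarrow> complex"
  assumes cinner_commute: "cinner x y = cnj (cinner y x)"
    and cinner_add_left: "cinner (x + y) z = cinner x z + cinner y z"
    and cinner_scaleC_left: "cinner (scaleC r x) y = cnj r * cinner x y"
    and cinner_ge_zero: "0 \<le> Re (cinner x x)"
    and cinner_eq_zero_iff: "cinner x x = 0 \<longleftrightarrow> x = 0"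
    and norm_eq_sqrt_cinner: "norm x = sqrt (Re (cinner x x))"

class chilbert_space = complex_inner + complete_space

instantiation complex :: chilbert_space
begin
definition scaleC_complex :: "complex \<Rightarrow> complex \<Rightarrow> complex" where
  "scaleC_complex a x = a * x"
definition cinner_complex :: "complex \<Rightarrow> complex \<Rightarrow> complex" where
  "cinner_complex x y = cnj x * y"
instance
proof
  fix x y z a b :: complex and r :: real
  show "a *\<^sub>C (x + y) = a *\<^sub>C x + a *\<^sub>C y" by (simp add: scaleC_complex_def algebra_simps)
  show "(a + b) *\<^sub>C x = a *\<^sub>C x + b *\<^sub>C x" by (simp add: scaleC_complex_def algebra_simps)
  show "a *\<^sub>C b *\<^sub>C x = (a * b) *\<^sub>C x" by (simp add: scaleC_complex_def algebra_simps)
  show "1 *\<^sub>C x = x" by (simp add: scaleC_complex_def)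
  show "r *\<^sub>R x = complex_of_real r *\<^sub>C x" by (simp add: scaleC_complex_def scaleR_conv_of_real)
  show "cinner x y = cnj (cinner y x)" by (simp add: cinner_complex_def)
  show "cinner (x + y) z = cinner x z + cinner y z" by (simp add: cinner_complex_def algebra_simps)
  show "cinner (a *\<^sub>C x) y = cnj a * cinner x y" by (simp add: cinner_complex_def scaleC_complex_def)
  show "0 \<le> Re (cinner x x)" by (simp add: cinner_complex_def)
  show "(cinner x x = 0) = (x = 0)" by (simp add: cinner_complex_def)
  show "norm x = sqrt (Re (cinner x x))"
    by (simp add: cinner_complex_def cmod_def power2_eq_square)
qed
end

definition bounded_clinear :: "('a::complex_inner \<Rightarrow> 'b::complex_inner) \<Rightarrow> bool" where
  "bounded_clinear T \<longleftrightarrow> bounded_linear T \<and> (\<forall>c x. T (c *\<^sub>C x) = c *\<^sub>C T x)"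

definition compact_op :: "('a::chilbert_space \<Rightarrow> 'a) \<Rightarrow> bool" where
  "compact_op T \<longleftrightarrow> bounded_clinear T \<and> compact (closure (T ` cball 0 1))"

definition adjoint :: "('a::chilbert_space \<Rightarrow> 'a) \<Rightarrow> 'a \<Rightarrow> 'a" where
  "adjoint T = (THE B. \<forall>x y. cinner (T x) y = cinner x (B y))"

definition csubspace :: "'a::complex_vector set \<Rightarrow> bool" where
  "csubspace S \<longleftrightarrow> 0 \<in> S \<and> (\<forall>x\<in>S. \<forall>y\<in>S. x + y \<in> S) \<and> (\<forall>c. \<forall>x\<in>S. c *\<^sub>C x \<in> S)"

definition closed_csubspace :: "'a::chilbert_space set \<Rightarrow> bool" where
  "closed_csubspace S \<longleftrightarrow> csubspace S \<and> closed S"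

definition normal_on :: "'a::chilbert_space set \<Rightarrow> ('a \<Rightarrow> 'a) \<Rightarrow> bool" where
  "normal_on S T \<longleftrightarrow> (\<exists>B. B ` S \<subseteq> S \<and> (\<forall>x\<in>S. \<forall>y\<in>S. cinner (T x) y = cinner x (B y))
                         \<and> (\<forall>x\<in>S. T (B x) = B (T x)))"

text \<open>Spectrum of the restriction of T to an invariant closed subspace S
  (lambda is in the resolvent iff T - lambda is a bijection of S; the inverse is then
  automatically bounded by the open mapping theorem).\<close>
definition spectrum_on :: "'a::chilbert_space set \<Rightarrow> ('a \<Rightarrow> 'a) \<Rightarrow> complex set" where
  "spectrum_on S T = {l. \<not> bij_betw (\<lambda>x. T x - l *\<^sub>C x) S S}"

text \<open>Quasi-nilpotent restriction: spectrum contained in {0} (equal to {0} whenever S is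
  nonzero, since spectra on nonzero complex Banach spaces are nonempty).\<close>
definition quasinilpotent_on :: "'a::chilbert_space set \<Rightarrow> ('a \<Rightarrow> 'a) \<Rightarrow> bool" where
  "quasinilpotent_on S T \<longleftrightarrow> spectrum_on S T \<subseteq> {0}"

end

theory Submission
  imports Defs "HOL-Computational_Algebra.Polynomial" "HOL-Computational_Algebra.Fundamental_Theorem_Algebra"
begin

lemma scaleC_zero_left[simp]: "(0::complex) *\<^sub>C (x::'a::complex_vector) = 0"
proof -
  have "0 *\<^sub>C x = (0 + 0) *\<^sub>C x" by simp
  also have "\<dots> = 0 *\<^sub>C x + 0 *\<^sub>C x" by (rule scaleC_add_left)
  finally show ?thesis by simp
qed

lemma scaleC_zero_right[simp]: "a *\<^sub>C (0::'a::complex_vector) = 0"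
proof -
  have "a *\<^sub>C (0::'a) = a *\<^sub>C (0 + 0)" by simp
  also have "\<dots> = a *\<^sub>C 0 + a *\<^sub>C 0" by (rule scaleC_add_right)
  finally show ?thesis by simp
qed

lemma scaleC_minus_left: "(- a) *\<^sub>C (x::'a::complex_vector) = - (a *\<^sub>C x)"
proof -
  have "(- a) *\<^sub>C x + a *\<^sub>C x = 0" by (simp flip: scaleC_add_left)
  then show ?thesis by (simp add: eq_neg_iff_add_eq_0)
qed

lemma scaleC_minus_right: "a *\<^sub>C (- x::'a::complex_vector) = - (a *\<^sub>C x)"
proof -
  have "a *\<^sub>C (- x) + a *\<^sub>C x = 0" by (simp flip: scaleC_add_right)
  then show ?thesis by (simp add: eq_neg_iff_add_eq_0)
qed

lemma scaleC_diff_left: "(a - b) *\<^sub>C (x::'a::complex_vector) = a *\<^sub>C x - b *\<^sub>C x"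
  by (metis diff_conv_add_uminus scaleC_add_left scaleC_minus_left)

lemma scaleC_diff_right: "a *\<^sub>C (x - y::'a::complex_vector) = a *\<^sub>C x - a *\<^sub>C y"
  by (metis diff_conv_add_uminus scaleC_add_right scaleC_minus_right)

lemma scaleC_sum_right: "a *\<^sub>C (\<Sum>i\<in>S. f i) = (\<Sum>i\<in>S. a *\<^sub>C (f i::'a::complex_vector))"
  by (induction S rule: infinite_finite_induct) (auto simp: scaleC_add_right)

lemma scaleC_of_real: "complex_of_real r *\<^sub>C (x::'a::complex_vector) = r *\<^sub>R x"
  by (simp add: scaleR_scaleC)

interpretation cvs: Vector_Spaces.vector_space "scaleC :: complex \<Rightarrow> 'a::complex_vector \<Rightarrow> 'a"
  by unfold_locales (simp_all add: scaleC_add_right scaleC_add_left scaleC_scaleC scaleC_one)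

section \<open>Inner product algebra\<close>

lemma cinner_add_right: "cinner x (y + z) = cinner x y + cinner x z"
proof -
  have "cinner x (y + z) = cnj (cinner (y + z) x)" by (rule cinner_commute)
  also have "\<dots> = cnj (cinner y x) + cnj (cinner z x)" by (simp add: cinner_add_left)
  finally show ?thesis by (metis cinner_commute)
qed

lemma cinner_scaleC_right: "cinner x (c *\<^sub>C y) = c * cinner x y"
proof -
  have "cinner x (c *\<^sub>C y) = cnj (cinner (c *\<^sub>C y) x)" by (rule cinner_commute)
  also have "\<dots> = c * cnj (cinner y x)" by (simp add: cinner_scaleC_left)
  finally show ?thesis by (metis cinner_commute)
qed

lemma cinner_zero_left[simp]: "cinner 0 x = 0"
proof -
  have "cinner 0 x = cinner (0 + 0) x" by simp
  also have "\<dots> = cinner 0 x + cinner 0 x" by (rule cinner_add_left)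
  finally show ?thesis by simp
qed

lemma cinner_zero_right[simp]: "cinner x 0 = 0"
  by (subst cinner_commute) simp

lemma cinner_minus_left: "cinner (- x) y = - cinner x y"
proof -
  have "cinner (- x) y + cinner x y = 0"
    by (simp flip: cinner_add_left)
  then show ?thesis by (simp add: eq_neg_iff_add_eq_0)
qed

lemma cinner_minus_right: "cinner x (- y) = - cinner x y"
proof -
  have "cinner x (- y) = cnj (cinner (- y) x)" by (rule cinner_commute)
  also have "\<dots> = - cnj (cinner y x)" by (simp add: cinner_minus_left)
  finally show ?thesis by (metis cinner_commute)
qed

lemma cinner_diff_left: "cinner (x - y) z = cinner x z - cinner y z"
  unfolding diff_conv_add_uminus by (simp only: cinner_add_left cinner_minus_left)

lemma cinner_diff_right: "cinner x (y - z) = cinner x y - cinner x z"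
  unfolding diff_conv_add_uminus by (simp only: cinner_add_right cinner_minus_right)

lemma cinner_scaleR_left: "cinner (r *\<^sub>R x) y = of_real r * cinner x y"
  by (simp add: scaleR_scaleC cinner_scaleC_left)

lemma cinner_scaleR_right: "cinner x (r *\<^sub>R y) = of_real r * cinner x y"
  by (simp add: scaleR_scaleC cinner_scaleC_right)

lemma cinner_sum_left: "cinner (\<Sum>i\<in>S. f i) y = (\<Sum>i\<in>S. cinner (f i) y)"
  by (induction S rule: infinite_finite_induct) (auto simp: cinner_add_left)

lemma cinner_sum_right: "cinner y (\<Sum>i\<in>S. f i) = (\<Sum>i\<in>S. cinner y (f i))"
  by (induction S rule: infinite_finite_induct) (auto simp: cinner_add_right)

lemma Im_cinner_self[simp]: "Im (cinner x x) = 0"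
proof -
  have "Im (cinner x x) = Im (cnj (cinner x x))" by (subst cinner_commute) simp
  then show ?thesis by simp
qed

lemma norm_sq_cinner: "(norm x)^2 = Re (cinner x x)"
  by (simp add: norm_eq_sqrt_cinner cinner_ge_zero)

lemma cinner_self: "cinner x x = complex_of_real ((norm x)^2)"
  by (simp add: norm_sq_cinner complex_eq_iff)

lemma cinner_self_eq_0[simp]: "cinner x x = 0 \<longleftrightarrow> x = 0"
  by (rule cinner_eq_zero_iff)

lemma norm_add_sq: "(norm (x + y))^2 = (norm x)^2 + 2 * Re (cinner x y) + (norm y)^2"
proof -
  have "Re (cinner y x) = Re (cinner x y)" by (subst cinner_commute) simp
  then show ?thesis
    by (simp add: norm_sq_cinner cinner_add_left cinner_add_right)
qed

lemma norm_diff_sq: "(norm (x - y))^2 = (norm x)^2 - 2 * Re (cinner x y) + (norm y)^2"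
  using norm_add_sq[of x "-y"] by (simp add: cinner_minus_right)

lemma pythagoras: "cinner x y = 0 \<Longrightarrow> (norm (x + y))^2 = (norm x)^2 + (norm y)^2"
  by (simp add: norm_add_sq)

lemma norm_scaleC: "norm (c *\<^sub>C (x::'a::complex_inner)) = cmod c * norm x"
proof -
  have "cinner (c *\<^sub>C x) (c *\<^sub>C x) = (cnj c * c) * cinner x x"
    by (simp add: cinner_scaleC_left cinner_scaleC_right)
  also have "cnj c * c = complex_of_real ((cmod c)^2)"
    using complex_norm_square[of c] by (simp add: mult.commute)
  finally have "complex_of_real ((norm (c *\<^sub>C x))^2) = complex_of_real ((cmod c)^2 * (norm x)^2)"
    by (simp only: cinner_self of_real_mult)
  then have "(norm (c *\<^sub>C x))^2 = (cmod c)^2 * (norm x)^2"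
    by (simp only: of_real_eq_iff)
  also have "\<dots> = (cmod c * norm x)^2" by (simp add: power_mult_distrib)
  finally show ?thesis by (simp add: power2_eq_iff_nonneg)
qed

lemma Re_cinner_le: "Re (cinner x y) \<le> norm x * norm y"
proof -
  have "4 * Re (cinner x y) = (norm (x + y))^2 - (norm (x - y))^2"
    by (simp add: norm_add_sq norm_diff_sq)
  also have "\<dots> \<le> (norm x + norm y)^2 - (norm x - norm y)^2"
  proof -
    have "(norm (x+y))^2 \<le> (norm x + norm y)^2"
      by (simp add: norm_triangle_ineq power_mono)
    moreover have "(norm x - norm y)^2 \<le> (norm (x - y))^2"
    proof -
      have "\<bar>norm x - norm y\<bar> \<le> norm (x - y)" by (rule norm_triangle_ineq3)
      then have "\<bar>norm x - norm y\<bar>^2 \<le> (norm (x - y))^2"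
        by (meson abs_ge_zero power_mono)
      then show ?thesis by simp
    qed
    ultimately show ?thesis by linarith
  qed
  also have "\<dots> = 4 * (norm x * norm y)" by (simp add: power2_eq_square algebra_simps)
  finally show ?thesis by simp
qed

lemma cinner_Cauchy_Schwarz: "cmod (cinner x y) \<le> norm x * norm y"
proof (cases "cinner x y = 0")
  case True
  then show ?thesis by simp
next
  case False
  define c where "c = cnj (sgn (cinner x y))"
  have "cnj (sgn (cinner x y)) * cinner x y = (cnj (cinner x y) * cinner x y) / complex_of_real (cmod (cinner x y))"
    by (simp add: sgn_eq)
  also have "cnj (cinner x y) * cinner x y = complex_of_real (cmod (cinner x y))^2"
    using complex_norm_square[of "cinner x y"] by (simp add: mult.commute)
  finally have 1: "c * cinner x y = complex_of_real (cmod (cinner x y))"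
    using False by (simp add: power2_eq_square c_def)
  have "cmod (cinner x y) = Re (cinner x (c *\<^sub>C y))"
    by (simp add: cinner_scaleC_right 1)
  also have "\<dots> \<le> norm x * norm (c *\<^sub>C y)" by (rule Re_cinner_le)
  also have "norm (c *\<^sub>C y) = norm y"
    using False by (simp add: norm_scaleC c_def norm_sgn)
  finally show ?thesis .
qed

lemma bcl_bl: "bounded_clinear T \<Longrightarrow> bounded_linear T"
  by (simp add: bounded_clinear_def)

lemma bcl_scaleC: "bounded_clinear T \<Longrightarrow> T (c *\<^sub>C x) = c *\<^sub>C T x"
  by (simp add: bounded_clinear_def)

lemma bcl_add: "bounded_clinear T \<Longrightarrow> T (x + y) = T x + T y"
  by (simp add: bounded_clinear_def linear_simps)

lemma bcl_diff: "bounded_clinear T \<Longrightarrow> T (x - y) = T x - T y"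
  by (simp add: bounded_clinear_def linear_simps)

lemma bcl_zero: "bounded_clinear T \<Longrightarrow> T 0 = 0"
  by (simp add: bounded_clinear_def linear_simps)

lemma bcl_minus: "bounded_clinear T \<Longrightarrow> T (- x) = - T x"
  by (simp add: bounded_clinear_def linear_simps)

lemma bcl_cont: "bounded_clinear T \<Longrightarrow> continuous_on S T"
  by (simp add: bounded_clinear_def linear_continuous_on)

lemma bcl_tendsto: "bounded_clinear T \<Longrightarrow> (f \<longlongrightarrow> l) F \<Longrightarrow> ((\<lambda>n. T (f n)) \<longlongrightarrow> T l) F"
  by (simp add: bounded_clinear_def bounded_linear.tendsto)

lemma bcl_bound: "bounded_clinear T \<Longrightarrow> \<exists>K>0. \<forall>x. norm (T x) \<le> norm x * K"
  unfolding bounded_clinear_def using bounded_linear.pos_bounded by blast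

lemma bl_cinner_right: "bounded_linear (cinner y)"
  by (rule bounded_linear_intro[where K = "norm y"])
    (auto simp: cinner_add_right cinner_scaleR_right scaleR_conv_of_real
      intro: order_trans[OF cinner_Cauchy_Schwarz] simp: mult.commute)

lemma bl_cinner_left: "bounded_linear (\<lambda>x. cinner x y)"
  by (rule bounded_linear_intro[where K = "norm y"])
    (auto simp: cinner_add_left cinner_scaleR_left scaleR_conv_of_real
      intro: order_trans[OF cinner_Cauchy_Schwarz])

lemma cinner_ext: "(\<And>x. cinner x a = cinner x b) \<Longrightarrow> a = b"
proof -
  assume h: "\<And>x. cinner x a = cinner x b"
  have "cinner (a - b) (a - b) = 0"
    by (simp add: cinner_diff_right h)
  then show "a = b" by simp
qed

lemma continuous_cinner_right: "continuous_on S (cinner y)"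
  by (simp add: bl_cinner_right linear_continuous_on)

lemma continuous_cinner_left: "continuous_on S (\<lambda>x. cinner x y)"
  by (simp add: bl_cinner_left linear_continuous_on)

lemma closed_cinner_zero_right: "closed {x. cinner y x = 0}"
  by (rule closed_Collect_eq) (simp_all add: continuous_cinner_right continuous_on_const)

lemma closed_cinner_zero_left: "closed {x. cinner x y = 0}"
  by (rule closed_Collect_eq) (simp_all add: continuous_cinner_left continuous_on_const)

lemma csubspace_scaleR: "csubspace M \<Longrightarrow> x \<in> M \<Longrightarrow> r *\<^sub>R x \<in> M"
  by (simp add: csubspace_def scaleR_scaleC)

lemma csubspace_diff: "csubspace M \<Longrightarrow> x \<in> M \<Longrightarrow> y \<in> M \<Longrightarrow> x - y \<in> M"
  unfolding csubspace_def
  by (metis diff_conv_add_uminus scaleC_minus_left scaleC_one)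

lemma csubspace_0: "csubspace M \<Longrightarrow> 0 \<in> M"
  by (simp add: csubspace_def)

lemma csubspace_add: "csubspace M \<Longrightarrow> x \<in> M \<Longrightarrow> y \<in> M \<Longrightarrow> x + y \<in> M"
  by (simp add: csubspace_def)

lemma csubspace_scaleC: "csubspace M \<Longrightarrow> x \<in> M \<Longrightarrow> c *\<^sub>C x \<in> M"
  by (simp add: csubspace_def)

section \<open>Projection theorem\<close>

lemma parallelogram:
  "(norm (u + v))^2 + (norm (u - v))^2 = 2 * (norm u)^2 + 2 * (norm (v::'a::complex_inner))^2"
  by (simp add: norm_add_sq norm_diff_sq)

lemma min_dist_orth:
  fixes M :: "'a::complex_inner set"
  assumes M: "csubspace M" and p: "p \<in> M" and min: "\<And>m. m \<in> M \<Longrightarrow> norm (z - p) \<le> norm (z - m)"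
    and m: "m \<in> M"
  shows "cinner m (z - p) = 0"
proof (rule ccontr)
  assume g0: "cinner m (z - p) \<noteq> 0"
  then have m0: "m \<noteq> 0" by auto
  define g where "g = cinner m (z - p)"
  define r where "r = (norm m)^2"
  have r0: "r > 0" using m0 by (simp add: r_def)
  define t where "t = g / complex_of_real r"
  have q: "p + t *\<^sub>C m \<in> M" using M p m by (simp add: csubspace_add csubspace_scaleC)
  have "cinner (z - p) (t *\<^sub>C m) = t * cnj g"
    by (simp add: cinner_scaleC_right g_def flip: cinner_commute)
  also have "t * cnj g = complex_of_real ((cmod g)^2 / r)"
    using complex_norm_square[of g] by (simp add: t_def)
  finally have e1: "Re (cinner (z - p) (t *\<^sub>C m)) = (cmod g)^2 / r" by simp
  have ct: "cmod t = cmod g / r" using r0 by (simp add: t_def norm_divide)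
  have e2: "(norm (t *\<^sub>C m))^2 = (cmod g)^2 / r"
  proof -
    have rm: "norm m * norm m = r" by (simp add: r_def power2_eq_square)
    have "(norm (t *\<^sub>C m))^2 = (cmod g / r)^2 * (norm m * norm m)"
      by (simp add: norm_scaleC ct power_mult_distrib power2_eq_square)
    also have "\<dots> = (cmod g)^2 / r" using r0 by (simp add: rm power2_eq_square)
    finally show ?thesis .
  qed
  have "(norm (z - (p + t *\<^sub>C m)))^2 = (norm ((z - p) - t *\<^sub>C m))^2"
    by (simp add: algebra_simps)
  also have "\<dots> = (norm (z - p))^2 - (cmod g)^2 / r"
    by (simp add: norm_diff_sq e1 e2)
  also have "\<dots> < (norm (z - p))^2"
    using g0 r0 by (simp add: g_def)
  finally have "norm (z - (p + t *\<^sub>C m)) < norm (z - p)"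
    using power_less_imp_less_base by fastforce
  with min[OF q] show False by simp
qed

lemma projection_exists:
  fixes M :: "'a::chilbert_space set"
  assumes M: "closed_csubspace M"
  shows "\<exists>p\<in>M. \<forall>m\<in>M. cinner m (z - p) = 0"
proof -
  have Ms: "csubspace M" and Mc: "closed M" using M by (auto simp: closed_csubspace_def)
  have Mne: "M \<noteq> {}" using Ms csubspace_0 by blast
  define d where "d = infdist z M"
  have d0: "d \<ge> 0" by (simp add: d_def infdist_nonneg)
  have dle: "\<And>m. m \<in> M \<Longrightarrow> d \<le> norm (z - m)"
    by (metis d_def dist_norm infdist_le)
  have "\<forall>n. \<exists>m\<in>M. norm (z - m) < d + 1 / (real n + 1)"
  proof
    fix n :: nat
    have "infdist z M < d + 1 / (real n + 1)" by (simp add: d_def)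
    then have "(INF a\<in>M. dist z a) < d + 1 / (real n + 1)"
      using Mne by (simp add: infdist_def)
    then obtain m where "m \<in> M" "dist z m < d + 1 / (real n + 1)"
      using Mne by (subst (asm) cINF_less_iff) (auto intro: bdd_belowI2[where m=0])
    then show "\<exists>m\<in>M. norm (z - m) < d + 1 / (real n + 1)" by (auto simp: dist_norm)
  qed
  then obtain ms where ms: "\<And>n. ms n \<in> M" "\<And>n. norm (z - ms n) < d + 1 / (real n + 1)"
    by metis
  have key: "(norm (ms a - ms b))^2 \<le> 2 * (2 * d + 1) * (1 / (real a + 1) + 1 / (real b + 1))" for a b
  proof -
    define w where "w = (1/2::real) *\<^sub>R (ms a + ms b)"
    have wM: "w \<in> M" using ms(1) Ms by (simp add: w_def csubspace_scaleR csubspace_add)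
    have par: "(norm ((z - ms a) + (z - ms b)))^2 + (norm ((z - ms a) - (z - ms b)))^2
        = 2 * (norm (z - ms a))^2 + 2 * (norm (z - ms b))^2" by (rule parallelogram)
    have "(z - ms a) + (z - ms b) = 2 *\<^sub>R (z - w)" by (simp add: w_def algebra_simps scaleR_2)
    then have n1: "norm ((z - ms a) + (z - ms b)) = 2 * norm (z - w)" by simp
    have n2: "(z - ms a) - (z - ms b) = ms b - ms a" by simp
    have "d^2 \<le> (norm (z - w))^2" using dle[OF wM] d0 by (simp add: power_mono)
    have sq: "\<And>t. 0 < t \<Longrightarrow> t \<le> 1 \<Longrightarrow> (d + t)^2 \<le> d^2 + (2 * d + 1) * t"
    proof -
      fix t :: real assume "0 < t" "t \<le> 1"
      then have "t * t \<le> t" by (simp add: mult_le_cancel_left1)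
      then show "(d + t)^2 \<le> d^2 + (2 * d + 1) * t" by (simp add: power2_eq_square algebra_simps)
    qed
    have ta: "(norm (z - ms a))^2 \<le> d^2 + (2 * d + 1) * (1 / (real a + 1))"
    proof -
      have "(norm (z - ms a))^2 \<le> (d + 1 / (real a + 1))^2"
        using ms(2)[of a] by (simp add: power_mono)
      also have "\<dots> \<le> d^2 + (2 * d + 1) * (1 / (real a + 1))" by (rule sq) auto
      finally show ?thesis .
    qed
    have tb: "(norm (z - ms b))^2 \<le> d^2 + (2 * d + 1) * (1 / (real b + 1))"
    proof -
      have "(norm (z - ms b))^2 \<le> (d + 1 / (real b + 1))^2"
        using ms(2)[of b] by (simp add: power_mono)
      also have "\<dots> \<le> d^2 + (2 * d + 1) * (1 / (real b + 1))" by (rule sq) auto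
      finally show ?thesis .
    qed
    have "(norm (ms a - ms b))^2 = (norm (ms b - ms a))^2" by (simp add: norm_minus_commute)
    also have "\<dots> = 2 * (norm (z - ms a))^2 + 2 * (norm (z - ms b))^2 - 4 * (norm (z - w))^2"
      using par n1 n2 by (simp add: power_mult_distrib)
    also have "\<dots> \<le> 2 * (2 * d + 1) * (1 / (real a + 1) + 1 / (real b + 1))"
    proof -
      have "2 * (2 * d + 1) * (1 / (real a + 1) + 1 / (real b + 1))
        = 2 * ((2 * d + 1) * (1 / (real a + 1))) + 2 * ((2 * d + 1) * (1 / (real b + 1)))"
        by (simp add: algebra_simps)
      then show ?thesis using ta tb \<open>d^2 \<le> (norm (z - w))^2\<close> by linarith
    qed
    finally show ?thesis .
  qed
  have "Cauchy ms"
  proof (rule metric_CauchyI)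
    fix e :: real assume e: "e > 0"
    obtain N :: nat where N: "4 * (2 * d + 1) / (e^2) < real N + 1"
      using reals_Archimedean2 by (metis add.commute add_strict_increasing zero_less_one less_eq_real_def)
    have Npos: "4 * (2 * d + 1) / (real N + 1) < e^2"
      using N e d0 by (simp add: field_simps)
    show "\<exists>M. \<forall>m\<ge>M. \<forall>n\<ge>M. dist (ms m) (ms n) < e"
    proof (intro exI allI impI)
      fix a b assume a: "a \<ge> N" and b: "b \<ge> N"
      have ia: "1 / (real a + 1) \<le> 1 / (real N + 1)" using a by (simp add: frac_le)
      have ib: "1 / (real b + 1) \<le> 1 / (real N + 1)" using b by (simp add: frac_le)
      have "(norm (ms a - ms b))^2 \<le> 2 * (2 * d + 1) * (1 / (real a + 1) + 1 / (real b + 1))"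
        by (rule key)
      also have "\<dots> \<le> 2 * (2 * d + 1) * (2 / (real N + 1))"
        using ia ib d0 by (intro mult_left_mono) auto
      also have "\<dots> = 4 * (2 * d + 1) / (real N + 1)" by simp
      also have "\<dots> < e^2" by (rule Npos)
      finally have "(norm (ms a - ms b))^2 < e^2" .
      then show "dist (ms a) (ms b) < e"
        using e by (simp add: dist_norm power_less_imp_less_base)
    qed
  qed
  then obtain p where lim: "ms \<longlonglongrightarrow> p" using Cauchy_convergent_iff convergent_def by blast
  have pM: "p \<in> M" using Mc ms(1) lim closed_sequentially by blast
  have "(\<lambda>n. norm (z - ms n)) \<longlonglongrightarrow> norm (z - p)"
    by (intro tendsto_intros lim)
  moreover have "(\<lambda>n. d + 1 / (real n + 1)) \<longlonglongrightarrow> d + 0"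
    using LIMSEQ_inverse_real_of_nat_add[of d] by (simp add: inverse_eq_divide add.commute)
  ultimately have "norm (z - p) \<le> d + 0"
    by (rule LIMSEQ_le) (auto intro: less_imp_le ms(2))
  then have "\<And>m. m \<in> M \<Longrightarrow> norm (z - p) \<le> norm (z - m)" using dle by force
  then show ?thesis using min_dist_orth[OF Ms pM] pM by blast
qed

section \<open>Riesz representation and adjoints\<close>

lemma riesz:
  fixes f :: "'a::chilbert_space \<Rightarrow> complex"
  assumes bl: "bounded_linear f" and hom: "\<And>c x. f (c *\<^sub>C x) = c * f x"
  shows "\<exists>w. \<forall>x. f x = cinner w x"
proof (cases "\<forall>x. f x = 0")
  case True
  then show ?thesis by (intro exI[of _ 0]) simp
next
  case False
  then obtain u where fu: "f u \<noteq> 0" by blast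
  define N where "N = {x. f x = 0}"
  have Ns: "csubspace N"
    unfolding N_def csubspace_def using bl hom by (simp add: linear_simps)
  have Nc: "closed N"
    unfolding N_def by (rule closed_Collect_eq) (simp_all add: bl linear_continuous_on continuous_on_const)
  obtain p where pN: "p \<in> N" and orth: "\<And>m. m \<in> N \<Longrightarrow> cinner m (u - p) = 0"
    using projection_exists[of N u] Ns Nc by (auto simp: closed_csubspace_def)
  define q where "q = u - p"
  have fq: "f q = f u" using pN bl by (simp add: q_def N_def linear_simps)
  then have q0: "q \<noteq> 0" using fu bl by (auto simp: linear_simps)
  have cq: "cinner q q \<noteq> 0" using q0 by simp
  define w where "w = cnj (f q / cinner q q) *\<^sub>C q"
  have "f x = cinner w x" for x
  proof -
    define v where "v = f x *\<^sub>C q - f q *\<^sub>C x"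
    have "f v = 0" using bl hom by (simp add: v_def linear_simps)
    then have "cinner v q = 0" using orth by (simp add: N_def q_def)
    then have "cinner q v = 0" by (subst cinner_commute) simp
    then have "f x * cinner q q = f q * cinner q x"
      by (simp add: v_def cinner_diff_right cinner_scaleC_right)
    then have "f x = f q / cinner q q * cinner q x" using cq by (simp add: field_simps)
    then show ?thesis by (simp add: w_def cinner_scaleC_left)
  qed
  then show ?thesis by blast
qed

lemma adjoint_exists:
  fixes T :: "'a::chilbert_space \<Rightarrow> 'a"
  assumes T: "bounded_clinear T"
  shows "\<exists>B. \<forall>x y. cinner (T x) y = cinner x (B y)"
proof -
  have "\<forall>y. \<exists>w. \<forall>x. cinner y (T x) = cinner w x"
  proof
    fix y
    show "\<exists>w. \<forall>x. cinner y (T x) = cinner w x"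
    proof (rule riesz)
      show "bounded_linear (\<lambda>x. cinner y (T x))"
        using bounded_linear_compose[OF bl_cinner_right bcl_bl[OF T]] by (simp add: o_def)
      show "cinner y (T (c *\<^sub>C x)) = c * cinner y (T x)" for c x
        using T by (simp add: bcl_scaleC cinner_scaleC_right)
    qed
  qed
  from choice[OF this] obtain B where B0: "\<forall>y x. cinner y (T x) = cinner (B y) x" by blast
  have B: "cinner y (T x) = cinner (B y) x" for x y using B0 by blast
  have "cinner (T x) y = cinner x (B y)" for x y
  proof -
    have "cinner (T x) y = cnj (cinner y (T x))" by (rule cinner_commute)
    also have "\<dots> = cnj (cinner (B y) x)" by (simp add: B)
    also have "\<dots> = cinner x (B y)" by (rule cinner_commute[symmetric])
    finally show ?thesis .
  qed
  then show ?thesis by blast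
qed

lemma adjoint_eq:
  fixes T :: "'a::chilbert_space \<Rightarrow> 'a"
  assumes T: "bounded_clinear T"
  shows "cinner (T x) y = cinner x (adjoint T y)"
proof -
  obtain B where B: "\<forall>x y. cinner (T x) y = cinner x (B y)" using adjoint_exists[OF T] by blast
  have uniq: "B' = B" if "\<forall>x y. cinner (T x) y = cinner x (B' y)" for B'
  proof (rule ext)
    fix y show "B' y = B y"
    proof (rule cinner_ext)
      fix x
      have "cinner x (B' y) = cinner (T x) y" using that by simp
      also have "\<dots> = cinner x (B y)" using B by simp
      finally show "cinner x (B' y) = cinner x (B y)" .
    qed
  qed
  have "adjoint T = B" unfolding adjoint_def
  proof (rule the_equality)
    show "\<forall>x y. cinner (T x) y = cinner x (B y)" by (rule B)
  next
    fix B' assume "\<forall>x y. cinner (T x) y = cinner x (B' y)"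
    then show "B' = B" by (rule uniq)
  qed
  then show ?thesis using B by simp
qed

lemma adjoint_eq':
  fixes T :: "'a::chilbert_space \<Rightarrow> 'a"
  assumes T: "bounded_clinear T"
  shows "cinner (adjoint T y) x = cinner y (T x)"
proof -
  have "cinner (adjoint T y) x = cnj (cinner x (adjoint T y))" by (rule cinner_commute)
  also have "\<dots> = cnj (cinner (T x) y)" by (simp add: adjoint_eq[OF T])
  also have "\<dots> = cinner y (T x)" by (rule cinner_commute[symmetric])
  finally show ?thesis .
qed

lemma adjoint_bcl:
  fixes T :: "'a::chilbert_space \<Rightarrow> 'a"
  assumes T: "bounded_clinear T"
  shows "bounded_clinear (adjoint T)"
proof -
  let ?B = "adjoint T"
  have add: "?B (x + y) = ?B x + ?B y" for x y
    by (rule cinner_ext) (simp add: adjoint_eq[OF T, symmetric] cinner_add_right)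
  have sc: "?B (c *\<^sub>C x) = c *\<^sub>C ?B x" for c x
    by (rule cinner_ext) (simp add: adjoint_eq[OF T, symmetric] cinner_scaleC_right)
  obtain K where K: "K > 0" "\<And>x. norm (T x) \<le> norm x * K" using bcl_bound[OF T] by blast
  have bd: "norm (?B y) \<le> norm y * K" for y
  proof -
    have "(norm (?B y))^2 = Re (cinner (T (?B y)) y)"
      by (simp add: adjoint_eq[OF T] norm_sq_cinner)
    also have "\<dots> \<le> norm (T (?B y)) * norm y" by (rule Re_cinner_le)
    also have "\<dots> \<le> norm (?B y) * K * norm y" using K by (simp add: mult_right_mono)
    finally have "(norm (?B y))^2 \<le> norm (?B y) * (norm y * K)" by (simp add: mult_ac)
    then show ?thesis
      using K(1) by (cases "norm (?B y) = 0") (auto simp: power2_eq_square)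
  qed
  have "bounded_linear ?B"
    by (rule bounded_linear_intro[where K = K]) (auto simp: add scaleR_scaleC sc bd)
  then show ?thesis unfolding bounded_clinear_def using sc by blast
qed

lemma has_sum_diff':
  fixes f g :: "'i \<Rightarrow> 'b::topological_ab_group_add"
  assumes "(f has_sum a) A" "(g has_sum b) A"
  shows "((\<lambda>x. f x - g x) has_sum (a - b)) A"
proof -
  have "((\<lambda>x. - g x) has_sum (- b)) A" using assms(2) by (simp add: has_sum_uminus)
  from has_sum_add[OF assms(1) this] show ?thesis by simp
qed

lemma has_sum_nonneg_zero:
  fixes f :: "'i \<Rightarrow> real"
  assumes "(f has_sum 0) A" "\<And>x. x \<in> A \<Longrightarrow> f x \<ge> 0" "k \<in> A"
  shows "f k = 0"
proof -
  have "(f has_sum f k) {k}" using has_sum_finite[of "{k}" f] by simp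
  then have "f k \<le> 0"
    by (rule has_sum_mono_neutral[OF _ assms(1)]) (use assms in auto)
  then show ?thesis using assms(2,3) by force
qed

lemma bcl_closed_preimage:
  assumes T: "bounded_clinear T" and S: "closed_csubspace S"
  shows "closed_csubspace {x. T x \<in> S}"
proof -
  have "closed {x. T x \<in> S}"
    using continuous_closed_vimage[of S T] S bcl_cont[OF T, of UNIV]
    by (simp add: closed_csubspace_def vimage_def continuous_on_eq_continuous_at)
  moreover have "csubspace {x. T x \<in> S}"
    using S T unfolding closed_csubspace_def csubspace_def
    by (simp add: bcl_add bcl_zero bcl_scaleC)
  ultimately show ?thesis by (simp add: closed_csubspace_def)
qed

lemma bcl_closed_eq:
  assumes P: "bounded_clinear P" and Q: "bounded_clinear Q"
  shows "closed_csubspace {x. P x = Q x}"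
proof -
  have "closed {x. P x = Q x}"
    by (rule closed_Collect_eq) (simp_all add: bcl_cont P Q)
  moreover have "csubspace {x. P x = Q x}"
    using P Q unfolding csubspace_def by (simp add: bcl_add bcl_zero bcl_scaleC)
  ultimately show ?thesis by (simp add: closed_csubspace_def)
qed

lemma bcl_comp: "bounded_clinear P \<Longrightarrow> bounded_clinear Q \<Longrightarrow> bounded_clinear (\<lambda>x. P (Q x))"
  unfolding bounded_clinear_def using bounded_linear_compose[of P Q] by (auto simp: o_def)

lemma closed_csubspace_Inter:
  assumes "\<And>S. S \<in> F \<Longrightarrow> closed_csubspace S"
  shows "closed_csubspace (\<Inter>F)"
  using assms unfolding closed_csubspace_def csubspace_def by (auto intro: closed_Inter)

locale jsetting =
  fixes A :: "'i \<Rightarrow> 'a::chilbert_space \<Rightarrow> 'a" and I :: "'i set"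
  assumes compact: "\<And>i. i \<in> I \<Longrightarrow> compact_op (A i)"
    and commute: "\<And>i j. i \<in> I \<Longrightarrow> j \<in> I \<Longrightarrow> A i \<circ> A j = A j \<circ> A i"
    and sum_one: "\<And>x. ((\<lambda>i. adjoint (A i) (A i x)) has_sum x) I"
begin

lemma bcl: "i \<in> I \<Longrightarrow> bounded_clinear (A i)"
  using compact by (simp add: compact_op_def)

lemma adj_bcl: "i \<in> I \<Longrightarrow> bounded_clinear (adjoint (A i))"
  using adjoint_bcl bcl by blast

lemma comm: "i \<in> I \<Longrightarrow> j \<in> I \<Longrightarrow> A i (A j x) = A j (A i x)"
  using commute[of i j] by (metis comp_apply)

lemma sum_inner: "((\<lambda>i. cinner (A i y) (A i x)) has_sum cinner y x) I"
proof -
  have "((\<lambda>i. cinner y (adjoint (A i) (A i x))) has_sum cinner y x) I"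
    by (rule has_sum_bounded_linear[OF bl_cinner_right sum_one])
  then show ?thesis
    by (subst has_sum_cong[where g = "\<lambda>i. cinner y (adjoint (A i) (A i x))"])
      (simp_all add: adjoint_eq bcl)
qed

lemma sum_norm: "((\<lambda>i. (norm (A i x))^2) has_sum (norm x)^2) I"
  using has_sum_Re[OF sum_inner[of x x]] by (simp add: norm_sq_cinner)

definition E :: "('i \<Rightarrow> complex) \<Rightarrow> 'a set" where
  "E l = {x. \<forall>i\<in>I. A i x = l i *\<^sub>C x}"

lemma E_sub: "x \<in> E l \<Longrightarrow> y \<in> E l \<Longrightarrow> x - y \<in> E l"
  unfolding E_def by (simp add: bcl_diff bcl scaleC_diff_right)

lemma E_scale: "x \<in> E l \<Longrightarrow> c *\<^sub>C x \<in> E l"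
  unfolding E_def by (simp add: bcl_scaleC bcl scaleC_scaleC mult.commute)

lemma lam_sum:
  assumes x: "x \<in> E l" "x \<noteq> 0"
  shows "((\<lambda>i. (cmod (l i))^2) has_sum 1) I"
proof -
  have "((\<lambda>i. (cmod (l i))^2 * (norm x)^2) has_sum (norm x)^2) I"
    using sum_norm[of x] x(1)
    by (subst has_sum_cong[where g = "\<lambda>i. (norm (A i x))^2"])
      (simp_all add: E_def norm_scaleC power_mult_distrib)
  from has_sum_cmult_left[OF this, of "1 / (norm x)^2"] show ?thesis
    using x(2) by simp
qed

lemma adj_eigen:
  assumes x: "x \<in> E l" and j: "j \<in> I"
  shows "adjoint (A j) x = cnj (l j) *\<^sub>C x"
proof (cases "x = 0")
  case True
  then show ?thesis using adj_bcl[OF j] by (simp add: bcl_zero)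
next
  case False
  define w where "w = adjoint (A j) x"
  have S1: "((\<lambda>i. (norm (A i w))^2) has_sum (norm w)^2) I" by (rule sum_norm)
  have S2c: "((\<lambda>i. cinner (l i *\<^sub>C w) (A i w)) has_sum complex_of_real ((norm w)^2)) I"
  proof -
    have "((\<lambda>i. cinner (adjoint (A i) (A i x)) (A j w)) has_sum cinner x (A j w)) I"
      by (rule has_sum_bounded_linear[OF bl_cinner_left sum_one])
    moreover have "cinner x (A j w) = complex_of_real ((norm w)^2)"
      by (simp add: w_def adjoint_eq'[OF bcl[OF j], symmetric] cinner_self)
    moreover have "cinner (adjoint (A i) (A i x)) (A j w) = cinner (l i *\<^sub>C w) (A i w)"
      if i: "i \<in> I" for i
    proof -
      have "cinner (l i *\<^sub>C w) (A i w) = cnj (l i) * cinner x (A j (A i w))"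
        by (simp add: cinner_scaleC_left w_def adjoint_eq'[OF bcl[OF j]])
      also have "\<dots> = cnj (l i) * cinner (adjoint (A i) x) (A j w)"
        by (simp add: comm[OF j i] adjoint_eq'[OF bcl[OF i]])
      also have "\<dots> = cinner (adjoint (A i) (l i *\<^sub>C x)) (A j w)"
        by (simp add: bcl_scaleC[OF adj_bcl[OF i]] cinner_scaleC_left)
      also have "l i *\<^sub>C x = A i x" using x i by (simp add: E_def)
      finally show ?thesis by simp
    qed
    ultimately show ?thesis
      using has_sum_cong[of I "\<lambda>i. cinner (adjoint (A i) (A i x)) (A j w)" "\<lambda>i. cinner (l i *\<^sub>C w) (A i w)"]
      by simp
  qed
  have S2: "((\<lambda>i. Re (cinner (l i *\<^sub>C w) (A i w))) has_sum (norm w)^2) I"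
    using has_sum_Re[OF S2c] by simp
  have S3: "((\<lambda>i. (cmod (l i))^2 * (norm w)^2) has_sum (norm w)^2) I"
    using has_sum_cmult_left[OF lam_sum[OF x False], of "(norm w)^2"] by simp
  have S: "((\<lambda>i. (norm (A i w))^2 - 2 * Re (cinner (l i *\<^sub>C w) (A i w)) + (cmod (l i))^2 * (norm w)^2)
      has_sum ((norm w)^2 - 2 * (norm w)^2 + (norm w)^2)) I"
    by (intro has_sum_add has_sum_diff' S1 S3 has_sum_cmult_right S2)
  have "((\<lambda>i. (norm (A i w - l i *\<^sub>C w))^2) has_sum 0) I"
  proof -
    have "(norm (A i w - l i *\<^sub>C w))^2 =
      (norm (A i w))^2 - 2 * Re (cinner (l i *\<^sub>C w) (A i w)) + (cmod (l i))^2 * (norm w)^2" for i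
    proof -
      have "Re (cinner (A i w) (l i *\<^sub>C w)) = Re (cinner (l i *\<^sub>C w) (A i w))"
        by (subst cinner_commute) simp
      then show ?thesis by (simp add: norm_diff_sq norm_scaleC power_mult_distrib)
    qed
    then show ?thesis using S by simp
  qed
  then have wE: "w \<in> E l"
    using has_sum_nonneg_zero[of "\<lambda>i. (norm (A i w - l i *\<^sub>C w))^2" I]
    by (auto simp: E_def)
  define u where "u = w - cnj (l j) *\<^sub>C x"
  have uE: "u \<in> E l" unfolding u_def by (intro E_sub wE E_scale x)
  have "cinner w u = l j * cinner x u"
  proof -
    have "cinner w u = cinner x (A j u)" by (simp add: w_def adjoint_eq'[OF bcl[OF j]])
    also have "A j u = l j *\<^sub>C u" using uE j by (simp add: E_def)
    finally show ?thesis by (simp add: cinner_scaleC_right)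
  qed
  then have "cinner u u = 0"
    by (simp add: u_def cinner_diff_left cinner_scaleC_left)
  then have "u = 0" by simp
  then show ?thesis by (simp add: u_def w_def)
qed

end

context jsetting
begin

definition G :: "'a set" where "G = {x. \<exists>l. x \<in> E l}"
definition Hn :: "'a set" where "Hn = \<Inter>{S. closed_csubspace S \<and> G \<subseteq> S}"
definition Hqn :: "'a set" where "Hqn = {y. \<forall>g\<in>G. cinner g y = 0}"

lemma Hn_ccs: "closed_csubspace Hn"
  unfolding Hn_def by (rule closed_csubspace_Inter) auto

lemma G_Hn: "G \<subseteq> Hn"
  unfolding Hn_def by auto

lemma Hn_min: "closed_csubspace S \<Longrightarrow> G \<subseteq> S \<Longrightarrow> Hn \<subseteq> S"
  unfolding Hn_def by auto

lemma Hn_s: "csubspace Hn" using Hn_ccs by (simp add: closed_csubspace_def)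

lemma Hn_inv: assumes i: "i \<in> I" shows "A i ` Hn \<subseteq> Hn"
proof -
  have "Hn \<subseteq> {x. A i x \<in> Hn}"
  proof (rule Hn_min)
    show "closed_csubspace {x. A i x \<in> Hn}" by (rule bcl_closed_preimage[OF bcl[OF i] Hn_ccs])
    show "G \<subseteq> {x. A i x \<in> Hn}"
    proof
      fix g assume "g \<in> G"
      then obtain l where g: "g \<in> E l" by (auto simp: G_def)
      then have "A i g = l i *\<^sub>C g" using i by (simp add: E_def)
      moreover have "g \<in> Hn" using \<open>g \<in> G\<close> G_Hn by blast
      ultimately show "g \<in> {x. A i x \<in> Hn}" using Hn_s by (simp add: csubspace_scaleC)
    qed
  qed
  then show ?thesis by blast
qed

lemma Hn_adj_inv: assumes i: "i \<in> I" shows "adjoint (A i) ` Hn \<subseteq> Hn"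
proof -
  have "Hn \<subseteq> {x. adjoint (A i) x \<in> Hn}"
  proof (rule Hn_min)
    show "closed_csubspace {x. adjoint (A i) x \<in> Hn}"
      by (rule bcl_closed_preimage[OF adj_bcl[OF i] Hn_ccs])
    show "G \<subseteq> {x. adjoint (A i) x \<in> Hn}"
    proof
      fix g assume "g \<in> G"
      then obtain l where g: "g \<in> E l" by (auto simp: G_def)
      then have "adjoint (A i) g = cnj (l i) *\<^sub>C g" using i by (rule adj_eigen)
      moreover have "g \<in> Hn" using \<open>g \<in> G\<close> G_Hn by blast
      ultimately show "g \<in> {x. adjoint (A i) x \<in> Hn}" using Hn_s by (simp add: csubspace_scaleC)
    qed
  qed
  then show ?thesis by blast
qed

lemma Hn_comm: assumes i: "i \<in> I" and x: "x \<in> Hn"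
  shows "A i (adjoint (A i) x) = adjoint (A i) (A i x)"
proof -
  have "Hn \<subseteq> {x. A i (adjoint (A i) x) = adjoint (A i) (A i x)}"
  proof (rule Hn_min)
    show "closed_csubspace {x. A i (adjoint (A i) x) = adjoint (A i) (A i x)}"
      by (rule bcl_closed_eq[OF bcl_comp[OF bcl[OF i] adj_bcl[OF i]] bcl_comp[OF adj_bcl[OF i] bcl[OF i]]])
    show "G \<subseteq> {x. A i (adjoint (A i) x) = adjoint (A i) (A i x)}"
    proof
      fix g assume "g \<in> G"
      then obtain l where g: "g \<in> E l" by (auto simp: G_def)
      have a: "adjoint (A i) g = cnj (l i) *\<^sub>C g" using g i by (rule adj_eigen)
      have b: "A i g = l i *\<^sub>C g" using g i by (simp add: E_def)
      show "g \<in> {x. A i (adjoint (A i) x) = adjoint (A i) (A i x)}"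
        using a b by (simp add: bcl_scaleC[OF bcl[OF i]] bcl_scaleC[OF adj_bcl[OF i]] scaleC_scaleC mult.commute)
    qed
  qed
  then show ?thesis using x by blast
qed

lemma Hqn_ccs: "closed_csubspace Hqn"
proof -
  have "Hqn = \<Inter>((\<lambda>g. {y. cinner g y = 0}) ` G)" by (auto simp: Hqn_def)
  then have "closed Hqn" by (simp add: closed_INT closed_cinner_zero_right)
  moreover have "csubspace Hqn"
    unfolding csubspace_def Hqn_def by (simp add: cinner_add_right cinner_scaleC_right)
  ultimately show ?thesis by (simp add: closed_csubspace_def)
qed

lemma Hqn_s: "csubspace Hqn" using Hqn_ccs by (simp add: closed_csubspace_def)

lemma Hqn_inv: assumes i: "i \<in> I" shows "A i ` Hqn \<subseteq> Hqn"
proof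
  fix z assume "z \<in> A i ` Hqn"
  then obtain y where y: "y \<in> Hqn" and z: "z = A i y" by blast
  have "cinner g (A i y) = 0" if gG: "g \<in> G" for g
  proof -
    obtain l where g: "g \<in> E l" using gG by (auto simp: G_def)
    have "cinner g (A i y) = cinner (adjoint (A i) g) y" by (simp add: adjoint_eq'[OF bcl[OF i]])
    also have "\<dots> = l i * cinner g y" by (simp add: adj_eigen[OF g i] cinner_scaleC_left)
    also have "cinner g y = 0" using y gG by (simp add: Hqn_def)
    finally show ?thesis by simp
  qed
  then show "z \<in> Hqn" by (simp add: Hqn_def z)
qed

lemma orth: assumes x: "x \<in> Hqn" and y: "y \<in> Hn" shows "cinner x y = 0"
proof -
  have "Hn \<subseteq> {y. \<forall>x\<in>Hqn. cinner x y = 0}"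
  proof (rule Hn_min)
    have "{y. \<forall>x\<in>Hqn. cinner x y = 0} = \<Inter>((\<lambda>x. {y. cinner x y = 0}) ` Hqn)" by auto
    then have "closed {y. \<forall>x\<in>Hqn. cinner x y = 0}"
      by (simp add: closed_INT closed_cinner_zero_right)
    moreover have "csubspace {y. \<forall>x\<in>Hqn. cinner x y = 0}"
      unfolding csubspace_def by (simp add: cinner_add_right cinner_scaleC_right)
    ultimately show "closed_csubspace {y. \<forall>x\<in>Hqn. cinner x y = 0}"
      by (simp add: closed_csubspace_def)
    show "G \<subseteq> {y. \<forall>x\<in>Hqn. cinner x y = 0}"
    proof (intro subsetI CollectI ballI)
      fix g x assume "g \<in> G" "x \<in> Hqn"
      then have "cinner g x = 0" by (simp add: Hqn_def)
      then show "cinner x g = 0" by (subst cinner_commute) simp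
    qed
  qed
  then show ?thesis using x y by blast
qed

lemma decomp: "\<exists>x\<in>Hqn. \<exists>y\<in>Hn. z = x + y"
proof -
  obtain p where p: "p \<in> Hn" and o: "\<And>m. m \<in> Hn \<Longrightarrow> cinner m (z - p) = 0"
    using projection_exists[OF Hn_ccs, of z] by blast
  have "z - p \<in> Hqn" using o G_Hn by (auto simp: Hqn_def)
  then show ?thesis using p by (intro bexI[of _ "z - p"] bexI[of _ p]) auto
qed

lemma normal: assumes i: "i \<in> I" shows "normal_on Hn (A i)"
  unfolding normal_on_def
proof (intro exI[of _ "adjoint (A i)"] conjI ballI)
  show "adjoint (A i) ` Hn \<subseteq> Hn" by (rule Hn_adj_inv[OF i])
  show "cinner (A i x) y = cinner x (adjoint (A i) y)" for x y by (rule adjoint_eq[OF bcl[OF i]])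
  show "A i (adjoint (A i) x) = adjoint (A i) (A i x)" if "x \<in> Hn" for x by (rule Hn_comm[OF i that])
qed

end

section \<open>Separated sets in compact sets\<close>

lemma compact_separated_bound:
  fixes C :: "'a::metric_space set"
  assumes C: "compact C" and e: "e > 0"
  shows "\<exists>N. \<forall>F. finite F \<longrightarrow> F \<subseteq> C \<longrightarrow> (\<forall>x\<in>F. \<forall>y\<in>F. x \<noteq> y \<longrightarrow> e \<le> dist x y) \<longrightarrow> card F \<le> N"
proof -
  have tb: "\<forall>\<epsilon>>0. \<exists>k. finite k \<and> k \<subseteq> C \<and> C \<subseteq> (\<Union>x\<in>k. ball x \<epsilon>)"
    by (rule seq_compact_imp_totally_bounded[OF compact_imp_seq_compact[OF C]])
  have "e / 2 > 0" using e by simp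
  from tb[rule_format, OF this] obtain k where kk: "finite k \<and> k \<subseteq> C \<and> C \<subseteq> (\<Union>x\<in>k. ball x (e/2))"
    by (rule exE)
  then have k: "finite k" "k \<subseteq> C" "C \<subseteq> (\<Union>x\<in>k. ball x (e/2))" by simp_all
  show ?thesis
  proof (intro exI[of _ "card k"] allI impI)
    fix F assume F: "finite F" "F \<subseteq> C" "\<forall>x\<in>F. \<forall>y\<in>F. x \<noteq> y \<longrightarrow> e \<le> dist x y"
    have "\<forall>x\<in>F. \<exists>c. c \<in> k \<and> dist c x < e/2"
    proof
      fix x assume "x \<in> F"
      then have "x \<in> (\<Union>x\<in>k. ball x (e/2))" using F(2) k(3) by blast
      then show "\<exists>c. c \<in> k \<and> dist c x < e/2" by (auto simp: mem_ball)
    qed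
    from bchoice[OF this] obtain c where c0: "\<forall>x\<in>F. c x \<in> k \<and> dist (c x) x < e/2" by blast
    have c: "c x \<in> k \<and> dist (c x) x < e/2" if "x \<in> F" for x using c0 that by blast
    have "inj_on c F"
    proof (rule inj_onI)
      fix x y assume xy: "x \<in> F" "y \<in> F" "c x = c y"
      have "dist x y \<le> dist (c x) x + dist (c y) y"
        using xy(3) dist_triangle3[of x y "c x"] by simp
      also have "\<dots> < e" using c[OF xy(1)] c[OF xy(2)] by simp
      finally show "x = y" using F(3) xy by force
    qed
    moreover have "c ` F \<subseteq> k" using c by auto
    ultimately show "card F \<le> card k" using k(1) by (rule card_inj_on_le)
  qed
qed

lemma compact_no_separated_seq:
  fixes C :: "'a::metric_space set"
  fixes f :: "nat \<Rightarrow> 'a"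
  assumes C: "compact C" and e: "e > 0" and f: "\<And>n. f n \<in> C"
    and sep: "\<And>n m. n \<noteq> m \<Longrightarrow> e \<le> dist (f n) (f m)"
  shows False
proof -
  obtain N where N: "\<And>F. finite F \<Longrightarrow> F \<subseteq> C \<Longrightarrow> (\<forall>x\<in>F. \<forall>y\<in>F. x \<noteq> y \<longrightarrow> e \<le> dist x y) \<Longrightarrow> card F \<le> N"
    using compact_separated_bound[OF C e] by blast
  have inj: "inj f"
  proof (rule injI)
    fix n m assume "f n = f m"
    then show "n = m" using sep[of n m] e by (cases "n = m") auto
  qed
  have sepF: "\<forall>x\<in>f ` {..N}. \<forall>y\<in>f ` {..N}. x \<noteq> y \<longrightarrow> e \<le> dist x y"
  proof (intro ballI impI)
    fix x y assume "x \<in> f ` {..N}" "y \<in> f ` {..N}" "x \<noteq> y"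
    then obtain a b where "x = f a" "y = f b" "a \<noteq> b" by blast
    then show "e \<le> dist x y" using sep by simp
  qed
  have fin: "finite (f ` {..N})" by simp
  have sub: "f ` {..N} \<subseteq> C" using f by blast
  have "card (f ` {..N}) \<le> N" by (rule N[OF fin sub sepF])
  moreover have "card (f ` {..N}) = Suc N"
    using inj by (simp add: card_image inj_on_subset)
  ultimately show False by simp
qed

section \<open>Fredholm alternative\<close>

lemma bcl_scaleC_op: "bounded_clinear (\<lambda>v::'a::complex_inner. c *\<^sub>C v)"
proof -
  have "bounded_linear (\<lambda>v::'a. c *\<^sub>C v)"
    by (rule bounded_linear_intro[where K = "cmod c"])
      (auto simp: scaleC_add_right scaleR_scaleC scaleC_scaleC mult.commute norm_scaleC)
  then show ?thesis unfolding bounded_clinear_def by (simp add: scaleC_scaleC mult.commute)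
qed

lemma bcl_sub: "bounded_clinear P \<Longrightarrow> bounded_clinear Q \<Longrightarrow> bounded_clinear (\<lambda>x. P x - Q x)"
  unfolding bounded_clinear_def by (auto intro: bounded_linear_sub simp: scaleC_diff_right)

lemma compact_op_img: "compact_op T \<Longrightarrow> norm x \<le> 1 \<Longrightarrow> T x \<in> closure (T ` cball 0 1)"
  using closure_subset by (fastforce simp: dist_norm)

lemma bounded_below:
  fixes T :: "'a::chilbert_space \<Rightarrow> 'a"
  assumes T: "compact_op T" and S: "closed_csubspace S" and mu: "mu \<noteq> 0"
    and inj: "\<And>y. y \<in> S \<Longrightarrow> T y = mu *\<^sub>C y \<Longrightarrow> y = 0"
  shows "\<exists>c>0. \<forall>x\<in>S. c * norm x \<le> norm (T x - mu *\<^sub>C x)"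
proof (rule ccontr)
  assume "\<not> ?thesis"
  then have h: "\<forall>c>0. \<exists>x\<in>S. norm (T x - mu *\<^sub>C x) < c * norm x" by (auto simp: not_le)
  have Tb: "bounded_clinear T" using T by (simp add: compact_op_def)
  have Ss: "csubspace S" and Sc: "closed S" using S by (auto simp: closed_csubspace_def)
  have "\<forall>n. \<exists>x\<in>S. norm x = 1 \<and> norm (T x - mu *\<^sub>C x) < 1 / (real n + 1)"
  proof
    fix n
    have pos: "1 / (real n + 1) > 0" by simp
    obtain x where x: "x \<in> S" "norm (T x - mu *\<^sub>C x) < 1 / (real n + 1) * norm x"
      using h pos by blast
    then have x0: "x \<noteq> 0" using Tb by (auto simp: bcl_zero)
    define y where "y = (1 / norm x) *\<^sub>R x"
    have "y \<in> S" using x Ss by (simp add: y_def csubspace_scaleR)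
    moreover have "norm y = 1" using x0 by (simp add: y_def)
    moreover have "norm (T y - mu *\<^sub>C y) < 1 / (real n + 1)"
    proof -
      have e1: "T y = (1 / norm x) *\<^sub>R T x" using bcl_bl[OF Tb] by (simp add: y_def linear_simps)
      have e2: "mu *\<^sub>C y = (1 / norm x) *\<^sub>R (mu *\<^sub>C x)"
        by (simp add: y_def scaleR_scaleC scaleC_scaleC mult.commute)
      have "norm (T y - mu *\<^sub>C y) = norm (T x - mu *\<^sub>C x) / norm x"
        by (simp add: e1 e2 flip: scaleR_diff_right)
      also have "\<dots> < 1 / (real n + 1)"
        using x(2) x0 by (simp add: pos_divide_less_eq)
      finally show ?thesis .
    qed
    ultimately show "\<exists>x\<in>S. norm x = 1 \<and> norm (T x - mu *\<^sub>C x) < 1 / (real n + 1)" by blast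
  qed
  then have "\<forall>n. \<exists>x. x \<in> S \<and> norm x = 1 \<and> norm (T x - mu *\<^sub>C x) < 1 / (real n + 1)" by blast
  from choice[OF this] obtain xs where xs0: "\<forall>n. xs n \<in> S \<and> norm (xs n) = 1 \<and> norm (T (xs n) - mu *\<^sub>C xs n) < 1 / (real n + 1)"
    by blast
  then have xs: "\<And>n. xs n \<in> S" "\<And>n. norm (xs n) = 1"
    "\<And>n. norm (T (xs n) - mu *\<^sub>C xs n) < 1 / (real n + 1)" by simp_all
  have sc: "seq_compact (closure (T ` cball 0 1))"
    using T by (simp add: compact_op_def compact_imp_seq_compact)
  have inC: "\<forall>n. T (xs n) \<in> closure (T ` cball 0 1)"
    using compact_op_img[OF T] xs(2) by simp
  obtain z r where "z \<in> closure (T ` cball 0 1)" and r: "strict_mono r"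
    and lim: "((\<lambda>n. T (xs n)) \<circ> r) \<longlonglongrightarrow> z"
    by (rule seq_compactE[OF sc inC])
  have d0: "(\<lambda>n. T (xs n) - mu *\<^sub>C xs n) \<longlonglongrightarrow> 0"
  proof (rule tendsto_norm_zero_cancel, rule Lim_null_comparison[OF _ LIMSEQ_inverse_real_of_nat])
    show "\<forall>\<^sub>F n in sequentially. norm (norm (T (xs n) - mu *\<^sub>C xs n)) \<le> inverse (real (Suc n))"
      using xs(3) by (auto intro!: always_eventually less_imp_le simp: inverse_eq_divide add.commute)
  qed
  have d1: "(\<lambda>n. (T (xs (r n)) - mu *\<^sub>C xs (r n))) \<longlonglongrightarrow> 0"
    using LIMSEQ_subseq_LIMSEQ[OF d0 r] by (simp add: o_def)
  have "(\<lambda>n. T (xs (r n)) - (T (xs (r n)) - mu *\<^sub>C xs (r n))) \<longlonglongrightarrow> z - 0"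
    using lim d1 by (intro tendsto_diff) (auto simp: o_def)
  then have l2: "(\<lambda>n. mu *\<^sub>C xs (r n)) \<longlonglongrightarrow> z" by simp
  define y where "y = inverse mu *\<^sub>C z"
  have l3: "(\<lambda>n. xs (r n)) \<longlonglongrightarrow> y"
    using bcl_tendsto[OF bcl_scaleC_op[of "inverse mu"] l2] mu by (simp add: y_def scaleC_scaleC scaleC_one)
  have yS: "y \<in> S" by (rule closed_sequentially[OF Sc _ l3]) (simp add: xs(1))
  have "(\<lambda>n. norm (xs (r n))) \<longlonglongrightarrow> norm y" using l3 by (rule tendsto_norm)
  then have ny: "norm y = 1" using xs(2) by (simp add: LIMSEQ_const_iff)
  have "(\<lambda>n. T (xs (r n))) \<longlonglongrightarrow> T y" using bcl_tendsto[OF Tb l3] .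
  moreover have "(\<lambda>n. T (xs (r n))) \<longlonglongrightarrow> z" using lim by (simp add: o_def)
  ultimately have "T y = z" by (rule LIMSEQ_unique)
  then have "T y = mu *\<^sub>C y" using mu by (simp add: y_def scaleC_scaleC scaleC_one)
  then have "y = 0" using inj yS by blast
  then show False using ny by simp
qed

lemma closed_image_bb:
  fixes U :: "'a::chilbert_space \<Rightarrow> 'a"
  assumes U: "bounded_clinear U" and S: "closed_csubspace S"
    and bb: "c > 0" "\<And>x. x \<in> S \<Longrightarrow> c * norm x \<le> norm (U x)"
  shows "closed_csubspace (U ` S)"
proof -
  have Ss: "csubspace S" and Sc: "closed S" using S by (auto simp: closed_csubspace_def)
  have "csubspace (U ` S)"
    unfolding csubspace_def
  proof (intro conjI ballI allI)
    show "0 \<in> U ` S" by (rule rev_image_eqI[of 0]) (simp_all add: csubspace_0[OF Ss] bcl_zero[OF U])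
    fix x y assume "x \<in> U ` S" "y \<in> U ` S"
    then obtain a b where "a \<in> S" "b \<in> S" "x = U a" "y = U b" by blast
    then show "x + y \<in> U ` S"
      by (intro rev_image_eqI[of "a + b"]) (simp_all add: csubspace_add[OF Ss] bcl_add[OF U])
  next
    fix c x assume "x \<in> U ` S"
    then obtain a where "a \<in> S" "x = U a" by blast
    then show "c *\<^sub>C x \<in> U ` S"
      by (intro rev_image_eqI[of "c *\<^sub>C a"]) (simp_all add: csubspace_scaleC[OF Ss] bcl_scaleC[OF U])
  qed
  moreover have "closed (U ` S)"
    unfolding closed_sequential_limits
  proof (intro allI impI, elim conjE)
    fix x l assume x: "\<forall>n. x n \<in> U ` S" and lim: "x \<longlonglongrightarrow> l"
    then have "\<forall>n. \<exists>t. t \<in> S \<and> x n = U t" by blast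
    from choice[OF this] obtain s where s0: "\<forall>n. s n \<in> S \<and> x n = U (s n)" by blast
    then have s: "\<And>n. s n \<in> S" "\<And>n. x n = U (s n)" by simp_all
    have "Cauchy s"
    proof (rule metric_CauchyI)
      fix e :: real assume e: "e > 0"
      have "Cauchy x" using lim by (rule LIMSEQ_imp_Cauchy)
      moreover have "c * e > 0" using bb(1) e by simp
      ultimately obtain M where M0: "\<forall>m\<ge>M. \<forall>n\<ge>M. dist (x m) (x n) < c * e"
        using metric_CauchyD by blast
      then have M: "\<And>m n. m \<ge> M \<Longrightarrow> n \<ge> M \<Longrightarrow> dist (x m) (x n) < c * e" by blast
      show "\<exists>M. \<forall>m\<ge>M. \<forall>n\<ge>M. dist (s m) (s n) < e"
      proof (intro exI allI impI)
        fix m n assume "m \<ge> M" "n \<ge> M"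
        then have "dist (x m) (x n) < c * e" by (rule M)
        moreover have "c * norm (s m - s n) \<le> norm (U (s m - s n))"
          using bb(2) Ss s(1) by (simp add: csubspace_diff)
        ultimately have "c * dist (s m) (s n) < c * e"
          using U s(2) by (simp add: dist_norm bcl_diff)
        then show "dist (s m) (s n) < e" using bb(1) by simp
      qed
    qed
    then obtain s0 where s0: "s \<longlonglongrightarrow> s0" using Cauchy_convergent_iff convergent_def by blast
    have "s0 \<in> S" by (rule closed_sequentially[OF Sc _ s0]) (simp add: s(1))
    moreover have "x = (\<lambda>n. U (s n))" by (rule ext) (simp add: s(2))
    then have "x \<longlonglongrightarrow> U s0" using bcl_tendsto[OF U s0] by simp
    then have "l = U s0" using lim LIMSEQ_unique by blast
    ultimately show "l \<in> U ` S" by blast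
  qed
  ultimately show ?thesis by (simp add: closed_csubspace_def)
qed

lemma fredholm_surj:
  fixes T :: "'a::chilbert_space \<Rightarrow> 'a"
  assumes T: "compact_op T" and S: "closed_csubspace S" and inv: "T ` S \<subseteq> S" and mu: "mu \<noteq> 0"
    and inj: "\<And>y. y \<in> S \<Longrightarrow> T y = mu *\<^sub>C y \<Longrightarrow> y = 0"
  shows "(\<lambda>x. T x - mu *\<^sub>C x) ` S = S"
proof (rule ccontr)
  assume neq: "(\<lambda>x. T x - mu *\<^sub>C x) ` S \<noteq> S"
  define U where "U = (\<lambda>x. T x - mu *\<^sub>C x)"
  have Tb: "bounded_clinear T" using T by (simp add: compact_op_def)
  have Ub: "bounded_clinear U" unfolding U_def by (rule bcl_sub[OF Tb bcl_scaleC_op])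
  have Ss: "csubspace S" using S by (simp add: closed_csubspace_def)
  obtain c where c: "c > 0" "\<And>x. x \<in> S \<Longrightarrow> c * norm x \<le> norm (U x)"
    using bounded_below[OF T S mu inj] unfolding U_def by blast
  have US: "U x \<in> S" if "x \<in> S" for x
  proof -
    have "T x \<in> S" using that inv by blast
    moreover have "mu *\<^sub>C x \<in> S" using that by (rule csubspace_scaleC[OF Ss])
    ultimately show ?thesis unfolding U_def by (rule csubspace_diff[OF Ss])
  qed
  have Uinj: "inj_on U S"
  proof (rule inj_onI)
    fix x y assume xy: "x \<in> S" "y \<in> S" "U x = U y"
    then have "U (x - y) = 0" using Ub by (simp add: bcl_diff)
    then have "T (x - y) = mu *\<^sub>C (x - y)" by (simp add: U_def)
    moreover have "x - y \<in> S" using xy Ss by (simp add: csubspace_diff)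
    ultimately have "x - y = 0" using inj by blast
    then show "x = y" by simp
  qed
  define R where "R n = (U ^^ n) ` S" for n
  have R0: "R 0 = S" by (simp add: R_def)
  have RS: "R (Suc n) = U ` R n" for n by (simp add: R_def image_comp)
  have Rsub: "R n \<subseteq> S" for n
  proof (induction n)
    case 0 then show ?case by (simp add: R0)
  next
    case (Suc n)
    show ?case unfolding RS using Suc US by blast
  qed
  have Rccs: "closed_csubspace (R n)" for n
  proof (induction n)
    case 0 then show ?case using S by (simp add: R0)
  next
    case (Suc n)
    show ?case unfolding RS
    proof (rule closed_image_bb[OF Ub Suc c(1)])
      fix x assume "x \<in> R n"
      then have "x \<in> S" using Rsub[of n] by blast
      then show "c * norm x \<le> norm (U x)" by (rule c(2))
    qed
  qed
  have Rdec: "R (Suc n) \<subseteq> R n" for n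
  proof (induction n)
    case 0 then show ?case using US by (auto simp: R0 RS)
  next
    case (Suc n)
    have "U ` R (Suc n) \<subseteq> U ` R n" using Suc.IH by (rule image_mono)
    then show ?case by (simp only: RS)
  qed
  have Rmono: "R m \<subseteq> R k" if "k \<le> m" for k m
    using that
  proof (induction m rule: dec_induct)
    case base then show ?case by simp
  next
    case (step m) then show ?case using Rdec[of m] by blast
  qed
  have Rneq: "R (Suc n) \<noteq> R n" for n
  proof (induction n)
    case 0 then show ?case using neq by (simp add: R0 RS U_def)
  next
    case (Suc n)
    show ?case
    proof
      assume "R (Suc (Suc n)) = R (Suc n)"
      then have "U ` R (Suc n) = U ` R n" by (simp add: RS)
      then have "R (Suc n) = R n" using inj_on_image_eq_iff[OF Uinj Rsub Rsub] by blast
      with Suc show False by simp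
    qed
  qed
  have "\<forall>n. \<exists>x. x \<in> R n \<and> norm x = 1 \<and> (\<forall>m\<in>R (Suc n). cinner m x = 0)"
  proof
    fix n
    obtain u where u: "u \<in> R n" "u \<notin> R (Suc n)" using Rneq[of n] Rdec[of n] by blast
    obtain p where p: "p \<in> R (Suc n)" and o: "\<And>m. m \<in> R (Suc n) \<Longrightarrow> cinner m (u - p) = 0"
      using projection_exists[OF Rccs[of "Suc n"], of u] by blast
    define q where "q = u - p"
    have Rns: "csubspace (R n)" using Rccs[of n] by (simp add: closed_csubspace_def)
    have qR: "q \<in> R n" using u(1) p Rdec[of n] Rns by (auto simp: q_def intro: csubspace_diff)
    have q0: "q \<noteq> 0" using u p by (auto simp: q_def)
    define x where "x = (1 / norm q) *\<^sub>R q"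
    have "x \<in> R n" using qR Rns by (simp add: x_def csubspace_scaleR)
    moreover have "norm x = 1" using q0 by (simp add: x_def)
    moreover have "\<forall>m\<in>R (Suc n). cinner m x = 0"
      using o by (simp add: x_def cinner_scaleR_right q_def)
    ultimately show "\<exists>x. x \<in> R n \<and> norm x = 1 \<and> (\<forall>m\<in>R (Suc n). cinner m x = 0)" by blast
  qed
  from choice[OF this] obtain xs where xs0: "\<forall>n. xs n \<in> R n \<and> norm (xs n) = 1 \<and> (\<forall>m\<in>R (Suc n). cinner m (xs n) = 0)"
    by blast
  then have xs: "\<And>n. xs n \<in> R n" "\<And>n. norm (xs n) = 1" "\<And>n m. m \<in> R (Suc n) \<Longrightarrow> cinner m (xs n) = 0"
    by simp_all
  have sep1: "cmod mu \<le> dist (T (xs n)) (T (xs m))" if nm: "n < m" for n m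
  proof -
    have Rs: "csubspace (R (Suc n))" using Rccs[of "Suc n"] by (simp add: closed_csubspace_def)
    have a: "U (xs n) \<in> R (Suc n)" using xs(1)[of n] by (simp add: RS)
    have b: "xs m \<in> R (Suc n)" using xs(1)[of m] Rmono[of "Suc n" m] nm by auto
    have b2: "U (xs m) \<in> R (Suc n)" using xs(1)[of m] Rmono[of "Suc n" "Suc m"] nm by (auto simp: RS)
    have "T (xs m) = U (xs m) + mu *\<^sub>C xs m" by (simp add: U_def)
    then have bT: "T (xs m) \<in> R (Suc n)" using b b2 Rs by (simp add: csubspace_add csubspace_scaleC)
    define r where "r = U (xs n) - T (xs m)"
    have rR: "r \<in> R (Suc n)" using a bT Rs by (simp add: r_def csubspace_diff)
    have eq: "T (xs n) - T (xs m) = mu *\<^sub>C xs n + r" by (simp add: r_def U_def)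
    have "cinner r (xs n) = 0" using xs(3)[OF rR] .
    then have "cinner (xs n) r = 0" by (subst cinner_commute) simp
    then have "cinner (mu *\<^sub>C xs n) r = 0" by (simp add: cinner_scaleC_left)
    then have "(norm (T (xs n) - T (xs m)))^2 = (norm (mu *\<^sub>C xs n))^2 + (norm r)^2"
      unfolding eq by (rule pythagoras)
    also have "\<dots> \<ge> (cmod mu)^2" using xs(2)[of n] by (simp add: norm_scaleC)
    finally have "(cmod mu)^2 \<le> (norm (T (xs n) - T (xs m)))^2" .
    then have "cmod mu \<le> norm (T (xs n) - T (xs m))" by (rule power2_le_imp_le[OF _ norm_ge_zero])
    then show ?thesis by (simp add: dist_norm)
  qed
  have sep: "cmod mu \<le> dist (T (xs n)) (T (xs m))" if "n \<noteq> m" for n m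
  proof (cases "n < m")
    case True then show ?thesis by (rule sep1)
  next
    case False then have "m < n" using that by simp
    then show ?thesis using sep1[of m n] by (simp add: dist_commute)
  qed
  have C: "compact (closure (T ` cball 0 1))" using T by (simp add: compact_op_def)
  have mu0: "cmod mu > 0" using mu by simp
  have inC: "T (xs n) \<in> closure (T ` cball 0 1)" for n
    using compact_op_img[OF T] xs(2) by simp
  show False
    by (rule compact_no_separated_seq[OF C mu0 inC sep])
qed

section \<open>Eigenvectors in finite dimension\<close>

definition clin :: "('a::complex_vector \<Rightarrow> 'a) \<Rightarrow> bool" where
  "clin T \<longleftrightarrow> (\<forall>x y. T (x + y) = T x + T y) \<and> (\<forall>c x. T (c *\<^sub>C x) = c *\<^sub>C T x)"

lemma clin_add: "clin T \<Longrightarrow> T (x + y) = T x + T y" by (simp add: clin_def)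
lemma clin_scaleC: "clin T \<Longrightarrow> T (c *\<^sub>C x) = c *\<^sub>C T x" by (simp add: clin_def)
lemma clin_zero: "clin T \<Longrightarrow> T 0 = 0"
  using clin_scaleC[of T 0 0] by simp
lemma clin_sum: "clin T \<Longrightarrow> T (\<Sum>k\<in>S. f k) = (\<Sum>k\<in>S. T (f k))"
  by (induction S rule: infinite_finite_induct) (simp_all add: clin_zero clin_add)

lemma bcl_clin: "bounded_clinear T \<Longrightarrow> clin T"
  by (simp add: clin_def bcl_add bcl_scaleC)

definition peval :: "('a::complex_vector \<Rightarrow> 'a) \<Rightarrow> complex poly \<Rightarrow> 'a \<Rightarrow> 'a" where
  "peval T p v = (\<Sum>k\<le>degree p. coeff p k *\<^sub>C (T ^^ k) v)"

lemma peval_bound: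
  assumes "degree p \<le> N"
  shows "peval T p v = (\<Sum>k\<le>N. coeff p k *\<^sub>C (T ^^ k) v)"
  unfolding peval_def
proof (rule sum.mono_neutral_left)
  show "finite {..N}" by simp
  show "{..degree p} \<subseteq> {..N}" using assms by auto
  show "\<forall>i\<in>{..N} - {..degree p}. coeff p i *\<^sub>C (T ^^ i) v = 0"
    by (auto simp: coeff_eq_0)
qed

lemma peval_add: "peval T (p + q) v = peval T p v + peval T q v"
proof -
  define N where "N = max (degree p) (degree q)"
  have "peval T (p + q) v = (\<Sum>k\<le>N. coeff (p + q) k *\<^sub>C (T ^^ k) v)"
    by (rule peval_bound) (use degree_add_le_max[of p q] in \<open>simp add: N_def\<close>)
  also have "\<dots> = (\<Sum>k\<le>N. coeff p k *\<^sub>C (T ^^ k) v) + (\<Sum>k\<le>N. coeff q k *\<^sub>C (T ^^ k) v)"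
    by (simp add: scaleC_add_left sum.distrib)
  also have "\<dots> = peval T p v + peval T q v"
  proof -
    have "peval T p v = (\<Sum>k\<le>N. coeff p k *\<^sub>C (T ^^ k) v)" by (rule peval_bound) (simp add: N_def)
    moreover have "peval T q v = (\<Sum>k\<le>N. coeff q k *\<^sub>C (T ^^ k) v)" by (rule peval_bound) (simp add: N_def)
    ultimately show ?thesis by simp
  qed
  finally show ?thesis .
qed

lemma peval_smult: "peval T (smult a p) v = a *\<^sub>C peval T p v"
proof -
  have "peval T (smult a p) v = (\<Sum>k\<le>degree p. coeff (smult a p) k *\<^sub>C (T ^^ k) v)"
    by (rule peval_bound) (rule degree_smult_le)
  also have "\<dots> = a *\<^sub>C peval T p v"
    by (simp add: peval_def scaleC_sum_right scaleC_scaleC)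
  finally show ?thesis .
qed

lemma peval_pCons0:
  assumes T: "clin T"
  shows "peval T (pCons 0 p) v = T (peval T p v)"
proof -
  have "peval T (pCons 0 p) v = (\<Sum>k\<le>Suc (degree p). coeff (pCons 0 p) k *\<^sub>C (T ^^ k) v)"
    by (rule peval_bound) (rule degree_pCons_le)
  also have "\<dots> = (\<Sum>k\<le>degree p. coeff (pCons 0 p) (Suc k) *\<^sub>C (T ^^ Suc k) v) + coeff (pCons 0 p) 0 *\<^sub>C (T ^^ 0) v"
    by (rule sum.atMost_Suc_shift[THEN trans]) simp
  also have "\<dots> = (\<Sum>k\<le>degree p. coeff p k *\<^sub>C T ((T ^^ k) v))" by simp
  also have "\<dots> = T (peval T p v)"
    by (simp add: peval_def clin_sum[OF T] clin_scaleC[OF T])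
  finally show ?thesis .
qed

lemma peval_const: "peval T [:a:] v = a *\<^sub>C v"
  by (simp add: peval_def)

lemma peval_monom1: "peval T (monom 1 b) v = (T ^^ b) v"
proof -
  have "peval T (monom 1 b) v = (\<Sum>k\<le>b. coeff (monom 1 b) k *\<^sub>C (T ^^ k) v)"
    by (rule peval_bound) (simp add: degree_monom_eq)
  also have "\<dots> = (\<Sum>k\<le>b. if b = k then (T ^^ k) v else 0)"
    by (rule sum.cong) (auto simp: scaleC_one)
  also have "\<dots> = (T ^^ b) v" by (simp add: sum.delta)
  finally show ?thesis .
qed

lemma csubspace_sum: "csubspace W \<Longrightarrow> (\<And>k. k \<in> S \<Longrightarrow> f k \<in> W) \<Longrightarrow> (\<Sum>k\<in>S. f k) \<in> W"
  by (induction S rule: infinite_finite_induct) (auto simp: csubspace_0 csubspace_add)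

lemma funpow_in: "(\<And>x. x \<in> W \<Longrightarrow> T x \<in> W) \<Longrightarrow> v \<in> W \<Longrightarrow> (T ^^ k) v \<in> W"
  by (induction k) auto

lemma peval_in:
  assumes W: "csubspace W" and TW: "\<And>x. x \<in> W \<Longrightarrow> T x \<in> W" and v: "v \<in> W"
  shows "peval T p v \<in> W"
  unfolding peval_def
  by (rule csubspace_sum[OF W]) (simp add: csubspace_scaleC[OF W] funpow_in[OF TW v])

lemma scaleC_eq_0_imp: "a *\<^sub>C (v::'a::complex_vector) = 0 \<Longrightarrow> a \<noteq> 0 \<Longrightarrow> v = 0"
proof -
  assume h: "a *\<^sub>C v = 0" "a \<noteq> 0"
  have "v = (inverse a * a) *\<^sub>C v" using h(2) by (simp add: scaleC_one)
  also have "\<dots> = inverse a *\<^sub>C (a *\<^sub>C v)" by (simp add: scaleC_scaleC)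
  finally show "v = 0" using h(1) by simp
qed

lemma root_eig:
  assumes T: "clin T"
  shows "p \<noteq> 0 \<Longrightarrow> peval T p v = 0 \<Longrightarrow> v \<noteq> 0 \<Longrightarrow>
    \<exists>c q. peval T q v \<noteq> 0 \<and> T (peval T q v) = c *\<^sub>C peval T q v"
proof (induction "degree p" arbitrary: p rule: less_induct)
  case less
  show ?case
  proof (cases "degree p = 0")
    case True
    then have p: "p = [:coeff p 0:]" by (simp add: degree_0_id)
    then have "coeff p 0 \<noteq> 0" using less.prems(1) by (metis pCons_0_0)
    moreover have "coeff p 0 *\<^sub>C v = 0" using less.prems(2) p by (metis peval_const)
    ultimately have "v = 0" by (metis scaleC_eq_0_imp)
    then show ?thesis using less.prems(3) by simp
  next
    case False
    then have "\<not> constant (poly p)" by (simp add: constant_degree)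
    then obtain z where "poly p z = 0" using fundamental_theorem_of_algebra by blast
    then have "[:-z, 1:] dvd p" by (simp add: poly_eq_0_iff_dvd)
    then obtain q where pq: "p = [:-z, 1:] * q" by (elim dvdE)
    have q0: "q \<noteq> 0" using pq less.prems(1) by auto
    have "degree ([:-z, 1:] * q) = degree [:-z, 1:] + degree q"
      by (rule degree_mult_eq) (simp_all add: q0)
    then have dq: "degree q < degree p" unfolding pq[symmetric] by simp
    have pe: "p = smult (-z) q + pCons 0 q" using pq by simp
    have "peval T p v = peval T (smult (-z) q) v + peval T (pCons 0 q) v"
      unfolding pe by (rule peval_add)
    then have "peval T p v = - z *\<^sub>C peval T q v + T (peval T q v)"
      by (simp only: peval_smult peval_pCons0[OF T])
    then have eq: "T (peval T q v) = z *\<^sub>C peval T q v"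
      using less.prems(2) by (simp add: scaleC_minus_left add_eq_0_iff neg_eq_iff_add_eq_0)
    show ?thesis
    proof (cases "peval T q v = 0")
      case True
      then show ?thesis using less.hyps[OF dq q0] less.prems(3) by blast
    next
      case False
      then show ?thesis using eq by blast
    qed
  qed
qed

lemma csubspace_cvs: "csubspace W \<longleftrightarrow> cvs.subspace W"
  by (simp add: csubspace_def cvs.subspace_def)

lemma eig_exists:
  fixes T :: "'a::complex_vector \<Rightarrow> 'a"
  assumes T: "clin T" and W: "csubspace W" and TW: "\<And>x. x \<in> W \<Longrightarrow> T x \<in> W"
    and B: "finite B" "W \<subseteq> cvs.span B" and v: "v \<in> W" "v \<noteq> 0"
  shows "\<exists>c w. w \<in> W \<and> w \<noteq> 0 \<and> T w = c *\<^sub>C w"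
proof -
  define n where "n = card B"
  define f where "f k = (T ^^ k) v" for k
  have "\<exists>p. p \<noteq> 0 \<and> peval T p v = 0"
  proof (cases "inj_on f {..n}")
    case False
    then obtain a b where ab: "a \<le> n" "b \<le> n" "a \<noteq> b" "f a = f b"
      by (auto simp: inj_on_def)
    define p :: "complex poly" where "p = monom 1 b + smult (-1) (monom 1 a)"
    have "coeff p b = 1" using ab(3) by (simp add: p_def)
    then have "p \<noteq> 0" by (intro notI) simp
    moreover have "peval T p v = 0"
    proof -
      have "peval T p v = peval T (monom 1 b) v + peval T (smult (-1) (monom 1 a)) v"
        unfolding p_def by (rule peval_add)
      also have "\<dots> = f b + (-1) *\<^sub>C f a"
        by (simp only: peval_smult peval_monom1 f_def)
      also have "\<dots> = 0" using ab(4) by (simp add: scaleC_minus_left scaleC_one)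
      finally show ?thesis .
    qed
    ultimately show ?thesis by blast
  next
    case True
    define F where "F = f ` {..n}"
    have cF: "card F = Suc n" using True by (simp add: F_def card_image)
    have fF: "finite F" by (simp add: F_def)
    have FW: "F \<subseteq> W" using funpow_in[OF TW v(1)] by (auto simp: F_def f_def)
    have "cvs.dependent F"
    proof (rule ccontr)
      assume "\<not> cvs.dependent F"
      then have "finite F \<and> card F \<le> card B"
        using cvs.independent_span_bound[OF B(1)] FW B(2) by blast
      then show False using cF by (simp add: n_def)
    qed
    then obtain u where u: "\<exists>x\<in>F. u x \<noteq> 0" "(\<Sum>x\<in>F. u x *\<^sub>C x) = 0"
      using cvs.dependent_finite[OF fF] by blast
    define p where "p = (\<Sum>k\<le>n. monom (u (f k)) k)"
    have cp: "coeff p k = (if k \<le> n then u (f k) else 0)" for k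
      by (simp add: p_def coeff_sum)
    have dp: "degree p \<le> n" by (rule degree_le) (simp add: cp)
    obtain k where k: "k \<le> n" "u (f k) \<noteq> 0" using u(1) by (auto simp: F_def)
    have "p \<noteq> 0"
    proof
      assume "p = 0" then have "coeff p k = 0" by simp
      then show False using k cp by simp
    qed
    moreover have "peval T p v = 0"
    proof -
      have "peval T p v = (\<Sum>k\<le>n. u (f k) *\<^sub>C f k)"
        by (simp add: peval_bound[OF dp] cp f_def)
      also have "\<dots> = (\<Sum>x\<in>F. u x *\<^sub>C x)"
        by (simp add: F_def sum.reindex[OF True])
      also have "\<dots> = 0" by (rule u(2))
      finally show ?thesis .
    qed
    ultimately show ?thesis by blast
  qed
  then obtain p where p: "p \<noteq> 0" "peval T p v = 0" by blast
  obtain c q where "peval T q v \<noteq> 0" "T (peval T q v) = c *\<^sub>C peval T q v"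
    using root_eig[OF T p v(2)] by blast
  moreover have "peval T q v \<in> W" by (rule peval_in[OF W TW v(1)])
  ultimately show ?thesis by blast
qed

lemma dim_eq_lemma:
  fixes W W' :: "'a::complex_vector set"
  assumes W': "cvs.subspace W'" and sub: "W' \<subseteq> W" and WB: "W \<subseteq> cvs.span B" and B: "finite B"
    and d: "cvs.dim W \<le> cvs.dim W'"
  shows "W \<subseteq> W'"
proof (rule ccontr)
  assume "\<not> W \<subseteq> W'"
  then obtain u where u: "u \<in> W" "u \<notin> W'" by blast
  obtain B' where B': "B' \<subseteq> W'" "cvs.independent B'" "W' \<subseteq> cvs.span B'" "card B' = cvs.dim W'"
    by (rule cvs.basis_exists)
  have fB': "finite B'"
    using cvs.independent_span_bound[OF B B'(2)] B'(1) sub WB by blast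
  have "cvs.span B' \<subseteq> W'" by (rule cvs.span_minimal[OF B'(1) W'])
  then have us: "u \<notin> cvs.span B'" using u(2) by blast
  have ind: "cvs.independent (insert u B')" by (rule cvs.independent_insertI[OF us B'(2)])
  obtain BW where BW: "BW \<subseteq> W" "cvs.independent BW" "W \<subseteq> cvs.span BW" "card BW = cvs.dim W"
    by (rule cvs.basis_exists)
  have fBW: "finite BW"
    using cvs.independent_span_bound[OF B BW(2)] BW(1) WB by blast
  have "insert u B' \<subseteq> cvs.span BW" using u(1) B'(1) sub BW(3) by blast
  then have "card (insert u B') \<le> card BW"
    using cvs.independent_span_bound[OF fBW ind] by blast
  moreover have "card (insert u B') = Suc (card B')"
    using fB' u(2) B'(1) by (subst card_insert_disjoint) auto
  ultimately show False using BW(4) B'(4) d by simp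
qed

lemma cinner_orth_sum:
  assumes F: "finite F" and on: "\<And>e. e \<in> F \<Longrightarrow> norm e = 1"
    and orth: "\<And>e f. e \<in> F \<Longrightarrow> f \<in> F \<Longrightarrow> e \<noteq> f \<Longrightarrow> cinner e f = 0"
    and e': "e' \<in> F"
  shows "cinner e' (\<Sum>e\<in>F. cinner e v *\<^sub>C e) = cinner e' v"
proof -
  have "cinner e' (\<Sum>e\<in>F. cinner e v *\<^sub>C e) = (\<Sum>e\<in>F. cinner e v * cinner e' e)"
    by (simp add: cinner_sum_right cinner_scaleC_right)
  also have "\<dots> = cinner e' v * cinner e' e' + (\<Sum>e\<in>F - {e'}. cinner e v * cinner e' e)"
    using F e' by (simp add: sum.remove)
  also have "(\<Sum>e\<in>F - {e'}. cinner e v * cinner e' e) = 0"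
    using orth e' by (intro sum.neutral) auto
  also have "cinner e' e' = 1" using on[OF e'] by (simp add: cinner_self)
  finally show ?thesis by simp
qed

lemma compact_eigenspace_fin:
  fixes T :: "'a::chilbert_space \<Rightarrow> 'a"
  assumes T: "compact_op T" and mu: "mu \<noteq> 0" and K: "csubspace K"
    and eig: "\<And>v. v \<in> K \<Longrightarrow> T v = mu *\<^sub>C v"
  shows "\<exists>B. finite B \<and> K \<subseteq> cvs.span B"
proof (rule ccontr)
  assume nf: "\<not> ?thesis"
  define ON where "ON F \<longleftrightarrow> finite F \<and> F \<subseteq> K \<and> (\<forall>e\<in>F. norm e = 1) \<and>
      (\<forall>e\<in>F. \<forall>f\<in>F. e \<noteq> f \<longrightarrow> cinner e f = 0)" for F
  have ex: "\<exists>F. ON F \<and> card F = n" for n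
  proof (induction n)
    case 0 show ?case by (intro exI[of _ "{}"]) (simp add: ON_def)
  next
    case (Suc n)
    then obtain F where F: "ON F" "card F = n" by blast
    have fF: "finite F" and FK: "F \<subseteq> K" and on: "\<And>e. e \<in> F \<Longrightarrow> norm e = 1"
      and orth: "\<And>e f. e \<in> F \<Longrightarrow> f \<in> F \<Longrightarrow> e \<noteq> f \<Longrightarrow> cinner e f = 0"
      using F(1) by (auto simp: ON_def)
    obtain v where v: "v \<in> K" "v \<notin> cvs.span F" using nf fF by blast
    define r where "r = v - (\<Sum>e\<in>F. cinner e v *\<^sub>C e)"
    have rK: "r \<in> K" unfolding r_def
      by (intro csubspace_diff[OF K] v(1) csubspace_sum[OF K] csubspace_scaleC[OF K]) (use FK in blast)
    have r0: "r \<noteq> 0"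
    proof
      assume "r = 0"
      then have "v = (\<Sum>e\<in>F. cinner e v *\<^sub>C e)" by (simp add: r_def)
      also have "\<dots> \<in> cvs.span F"
        by (intro cvs.span_sum cvs.span_scale cvs.span_base)
      finally show False using v(2) by simp
    qed
    have ro: "cinner e' r = 0" if "e' \<in> F" for e'
      using cinner_orth_sum[OF fF on orth that, of v] by (simp add: r_def cinner_diff_right)
    define x where "x = (1 / norm r) *\<^sub>R r"
    have xn: "norm x = 1" using r0 by (simp add: x_def)
    have xK: "x \<in> K" using rK K by (simp add: x_def csubspace_scaleR)
    have xo: "cinner e' x = 0" if "e' \<in> F" for e'
      using ro[OF that] by (simp add: x_def cinner_scaleR_right)
    have xF: "x \<notin> F"
    proof
      assume "x \<in> F"
      then have "cinner x x = 0" by (rule xo)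
      then show False using xn by simp
    qed
    have xo': "cinner x e' = 0" if "e' \<in> F" for e'
      by (subst cinner_commute) (simp add: xo[OF that])
    have "ON (insert x F)"
      unfolding ON_def using fF FK on orth xn xK xo xo' xF
      by auto
    moreover have "card (insert x F) = Suc n" using fF xF F(2) by simp
    ultimately show ?case by blast
  qed
  have C: "compact (closure (T ` cball 0 1))" using T by (simp add: compact_op_def)
  have mu0: "cmod mu > 0" using mu by simp
  obtain N where N: "\<And>F. finite F \<Longrightarrow> F \<subseteq> closure (T ` cball 0 1) \<Longrightarrow>
      (\<forall>x\<in>F. \<forall>y\<in>F. x \<noteq> y \<longrightarrow> cmod mu \<le> dist x y) \<Longrightarrow> card F \<le> N"
    using compact_separated_bound[OF C mu0] by blast
  obtain F where F: "ON F" "card F = Suc N" using ex by blast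
  have fF: "finite F" and FK: "F \<subseteq> K" and on: "\<And>e. e \<in> F \<Longrightarrow> norm e = 1"
    and orth: "\<And>e f. e \<in> F \<Longrightarrow> f \<in> F \<Longrightarrow> e \<noteq> f \<Longrightarrow> cinner e f = 0"
    using F(1) by (auto simp: ON_def)
  define G where "G = (\<lambda>e. mu *\<^sub>C e) ` F"
  have inj: "inj_on (\<lambda>e. mu *\<^sub>C e) F"
  proof (rule inj_onI)
    fix a b assume "mu *\<^sub>C a = mu *\<^sub>C b"
    then have "mu *\<^sub>C (a - b) = 0" by (simp add: scaleC_diff_right)
    then have "a - b = 0" using mu by (rule scaleC_eq_0_imp)
    then show "a = b" by simp
  qed
  have "card G \<le> N"
  proof (rule N)
    show "finite G" using fF by (simp add: G_def)
    show "G \<subseteq> closure (T ` cball 0 1)"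
    proof
      fix g assume "g \<in> G"
      then obtain e where e: "e \<in> F" "g = mu *\<^sub>C e" by (auto simp: G_def)
      then have "g = T e" using eig FK by auto
      then show "g \<in> closure (T ` cball 0 1)" using compact_op_img[OF T] on[OF e(1)] by simp
    qed
    show "\<forall>x\<in>G. \<forall>y\<in>G. x \<noteq> y \<longrightarrow> cmod mu \<le> dist x y"
    proof (intro ballI impI)
      fix x y assume "x \<in> G" "y \<in> G" "x \<noteq> y"
      then obtain a b where ab: "a \<in> F" "b \<in> F" "x = mu *\<^sub>C a" "y = mu *\<^sub>C b" "a \<noteq> b"
        by (auto simp: G_def)
      have "(norm (a - b))^2 = 2"
        using on[OF ab(1)] on[OF ab(2)] orth[OF ab(1) ab(2) ab(5)] by (simp add: norm_diff_sq)
      then have "1 \<le> norm (a - b)"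
        by (metis norm_ge_zero one_le_numeral one_power2 power2_le_imp_le)
      moreover have "dist x y = cmod mu * norm (a - b)"
        by (simp add: ab dist_norm norm_scaleC flip: scaleC_diff_right)
      ultimately show "cmod mu \<le> dist x y" using mu0 by (simp add: mult_le_cancel_left1)
    qed
  qed
  moreover have "card G = Suc N" using F(2) inj by (simp add: G_def card_image)
  ultimately show False by simp
qed

context jsetting
begin

lemma common_eig:
  assumes K: "csubspace K" and KB: "K \<subseteq> cvs.span B" "finite B"
    and y: "y \<in> K" "y \<noteq> 0" and Kinv: "\<And>j x. j \<in> I \<Longrightarrow> x \<in> K \<Longrightarrow> A j x \<in> K"
  shows "\<exists>w\<in>K. w \<noteq> 0 \<and> (\<forall>j\<in>I. \<exists>c. A j w = c *\<^sub>C w)"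
proof -
  define P where "P W \<longleftrightarrow> csubspace W \<and> W \<subseteq> K \<and> (\<exists>w\<in>W. w \<noteq> 0) \<and> (\<forall>j\<in>I. \<forall>x\<in>W. A j x \<in> W)" for W
  have PK: "P K" using K y Kinv by (auto simp: P_def)
  define d where "d = (LEAST d. \<exists>W. P W \<and> cvs.dim W = d)"
  have "\<exists>W. P W \<and> cvs.dim W = d"
    unfolding d_def by (rule LeastI[of _ "cvs.dim K"]) (use PK in blast)
  then obtain W where W: "P W" "cvs.dim W = d" by blast
  have minW: "cvs.dim W \<le> cvs.dim W'" if "P W'" for W'
    unfolding W(2) d_def by (rule Least_le) (use that in blast)
  have Ws: "csubspace W" and WK: "W \<subseteq> K" and Winv: "\<And>j x. j \<in> I \<Longrightarrow> x \<in> W \<Longrightarrow> A j x \<in> W"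
    using W(1) by (auto simp: P_def)
  obtain w0 where w0: "w0 \<in> W" "w0 \<noteq> 0" using W(1) by (auto simp: P_def)
  have "\<exists>c. A j w0 = c *\<^sub>C w0" if j: "j \<in> I" for j
  proof -
    obtain c w where cw: "w \<in> W" "w \<noteq> 0" "A j w = c *\<^sub>C w"
      using eig_exists[OF bcl_clin[OF bcl[OF j]] Ws Winv[OF j] KB(2) _ w0] WK KB(1) by blast
    define W' where "W' = {x\<in>W. A j x = c *\<^sub>C x}"
    have W's: "csubspace W'"
      using Ws unfolding W'_def csubspace_def
      by (simp add: bcl_add[OF bcl[OF j]] bcl_scaleC[OF bcl[OF j]] bcl_zero[OF bcl[OF j]]
          scaleC_add_right scaleC_scaleC mult.commute)
    have "P W'"
      unfolding P_def
    proof (intro conjI ballI)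
      show "csubspace W'" by (rule W's)
      show "W' \<subseteq> K" using WK by (auto simp: W'_def)
      show "\<exists>w\<in>W'. w \<noteq> 0" using cw by (auto simp: W'_def)
      fix k x assume k: "k \<in> I" and x: "x \<in> W'"
      have "A j (A k x) = A k (A j x)" by (rule comm[OF j k])
      also have "\<dots> = c *\<^sub>C A k x" using x by (simp add: W'_def bcl_scaleC[OF bcl[OF k]])
      finally show "A k x \<in> W'" using Winv[OF k] x by (simp add: W'_def)
    qed
    then have "cvs.dim W \<le> cvs.dim W'" by (rule minW)
    moreover have "W' \<subseteq> W" by (auto simp: W'_def)
    ultimately have "W \<subseteq> W'"
      using dim_eq_lemma[of W' W B] W's WK KB by (simp add: csubspace_cvs)
    then show ?thesis using w0 by (auto simp: W'_def)
  qed
  then show ?thesis using w0 WK by blast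
qed

lemma no_eig:
  assumes i: "i \<in> I" and mu: "mu \<noteq> 0" and y: "y \<in> Hqn" "A i y = mu *\<^sub>C y"
  shows "y = 0"
proof (rule ccontr)
  assume y0: "y \<noteq> 0"
  define K where "K = {v\<in>Hqn. A i v = mu *\<^sub>C v}"
  have Ks: "csubspace K"
    using Hqn_s unfolding K_def csubspace_def
    by (simp add: bcl_add[OF bcl[OF i]] bcl_scaleC[OF bcl[OF i]] bcl_zero[OF bcl[OF i]]
        scaleC_add_right scaleC_scaleC mult.commute)
  obtain B where B: "finite B" "K \<subseteq> cvs.span B"
    using compact_eigenspace_fin[OF compact[OF i] mu Ks] by (auto simp: K_def)
  have Kinv: "A j x \<in> K" if j: "j \<in> I" and x: "x \<in> K" for j x
  proof -
    have "A j x \<in> Hqn" using Hqn_inv[OF j] x by (auto simp: K_def)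
    moreover have "A i (A j x) = mu *\<^sub>C A j x"
      using x comm[OF i j] by (simp add: K_def bcl_scaleC[OF bcl[OF j]])
    ultimately show ?thesis by (simp add: K_def)
  qed
  obtain w where w: "w \<in> K" "w \<noteq> 0" "\<forall>j\<in>I. \<exists>c. A j w = c *\<^sub>C w"
    using common_eig[OF Ks B(2) B(1) _ y0 Kinv] y by (auto simp: K_def)
  from bchoice[OF w(3)] obtain l where l: "\<forall>j\<in>I. A j w = l j *\<^sub>C w" by blast
  then have "w \<in> G" by (auto simp: G_def E_def)
  moreover have "w \<in> Hqn" using w(1) by (simp add: K_def)
  ultimately have "cinner w w = 0" by (simp add: Hqn_def)
  then show False using w(2) by simp
qed

lemma qn: assumes i: "i \<in> I" shows "quasinilpotent_on Hqn (A i)"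
  unfolding quasinilpotent_on_def spectrum_on_def
proof
  fix l assume "l \<in> {l. \<not> bij_betw (\<lambda>x. A i x - l *\<^sub>C x) Hqn Hqn}"
  then have nb: "\<not> bij_betw (\<lambda>x. A i x - l *\<^sub>C x) Hqn Hqn" by simp
  show "l \<in> {0}"
  proof (rule ccontr)
    assume "l \<notin> {0}"
    then have l0: "l \<noteq> 0" by simp
    have inj: "inj_on (\<lambda>x. A i x - l *\<^sub>C x) Hqn"
    proof (rule inj_onI)
      fix x y assume xy: "x \<in> Hqn" "y \<in> Hqn" "A i x - l *\<^sub>C x = A i y - l *\<^sub>C y"
      have "A i (x - y) = l *\<^sub>C (x - y)"
        using xy(3) by (simp add: bcl_diff[OF bcl[OF i]] scaleC_diff_right algebra_simps)
      moreover have "x - y \<in> Hqn" using xy Hqn_s by (simp add: csubspace_diff)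
      ultimately have "x - y = 0" using no_eig[OF i l0] by blast
      then show "x = y" by simp
    qed
    have "(\<lambda>x. A i x - l *\<^sub>C x) ` Hqn = Hqn"
      by (rule fredholm_surj[OF compact[OF i] Hqn_ccs Hqn_inv[OF i] l0]) (rule no_eig[OF i l0])
    with inj nb show False by (simp add: bij_betw_def)
  qed
qed

lemma main:
  "\<exists>Hqn Hn. closed_csubspace Hqn \<and> closed_csubspace Hn
           \<and> (\<forall>x\<in>Hqn. \<forall>y\<in>Hn. cinner x y = 0)
           \<and> (\<forall>z. \<exists>x\<in>Hqn. \<exists>y\<in>Hn. z = x + y)
           \<and> (\<forall>i\<in>I. A i ` Hqn \<subseteq> Hqn \<and> A i ` Hn \<subseteq> Hn)
           \<and> (\<forall>i\<in>I. normal_on Hn (A i))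
           \<and> (\<forall>i\<in>I. quasinilpotent_on Hqn (A i))"
  by (intro exI[of _ Hqn] exI[of _ Hn] conjI ballI allI)
    (simp_all add: Hqn_ccs Hn_ccs orth decomp Hqn_inv Hn_inv normal qn)

end

theorem theorem1p6:
  fixes A :: "'i \<Rightarrow> 'a::chilbert_space \<Rightarrow> 'a" and I :: "'i set"
  assumes compact: "\<And>i. i \<in> I \<Longrightarrow> compact_op (A i)"
    and commute: "\<And>i j. i \<in> I \<Longrightarrow> j \<in> I \<Longrightarrow> A i \<circ> A j = A j \<circ> A i"
    and sum_one: "\<And>x. ((\<lambda>i. adjoint (A i) (A i x)) has_sum x) I"
  shows "\<exists>Hqn Hn. closed_csubspace Hqn \<and> closed_csubspace Hn
           \<and> (\<forall>x\<in>Hqn. \<forall>y\<in>Hn. cinner x y = 0)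
           \<and> (\<forall>z. \<exists>x\<in>Hqn. \<exists>y\<in>Hn. z = x + y)
           \<and> (\<forall>i\<in>I. A i ` Hqn \<subseteq> Hqn \<and> A i ` Hn \<subseteq> Hn)
           \<and> (\<forall>i\<in>I. normal_on Hn (A i))
           \<and> (\<forall>i\<in>I. quasinilpotent_on Hqn (A i))"
proof -
  interpret jsetting A I using assms by unfold_locales
  show ?thesis by (rule main)
qed

end
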